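(* Let $S$ be a 1-safe net system and $\pi=(O,h)$, $O=(C,E,G)$, its complete prefix unfolding. Let $t_1,t_2$ be transitions of $S$. Then ($t_1<_{tar}t_2$ and $t_1\bullet\cap\bullet t_2=\emptyset$) if and only if there exist $e_1,e_2\in E$ with $e_1$ co $e_2$, $h(e_1)=t_1$ and $h(e_2)=t_2$.
   Context: Petri net $N=(P,T,F)$ with pre/post-sets $\bullet x$, $x\bullet$; markings $M:P\to\mathbb{N}$, enabling (all input places marked), firing $M'=M-\bullet t+t\bullet$; net system $S=(N,M_0)$; $S$ is 1-safe if every reachable marking puts at most one token on each place. Transition adjacency relation: $t_1<_{tar}t_2$ iff there is a reachable marking $M_s$ enabling $t_1$ such that after firing $t_1$ from $M_s$, $t_2$ is enabled. For nodes of an occurrence net: $x<y$ iff there is a directed path with at least one arc from $x$ to $y$; $x\#y$ iff there are a condition $s$ and paths $s\,t_1\cdots x$, $s\,t_2\cdots y$ with $t_1\ne t_2$; $x$ co $y$ iff none of $x<y,y<x,x\#y$. The branching process $\pi=(O,h)$ ($h$ maps conditions to places and events to transitions), configurations, cut-off events w.r.t. an adequate order, and the complete prefix unfolding (greatest backward closed subnet of the unfolding with no event after a cut-off event) are as in McMillan/Esparza unfolding theory. *)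

theory Defs
  imports Main
begin

text \<open>A net N = (P,T,F); the flow relation F is split into its P-to-T part and its T-to-P part
  (places and transitions live in disjoint types).\<close>
record ('p,'t) pnet =
  places :: "'p set"
  trans :: "'t set"
  arcs_pt :: "('p \<times> 't) set"
  arcs_tp :: "('t \<times> 'p) set"

definition preT :: "('p,'t) pnet \<Rightarrow> 't \<Rightarrow> 'p set" where
  "preT N t = {p. (p, t) \<in> arcs_pt N}"

definition postT :: "('p,'t) pnet \<Rightarrow> 't \<Rightarrow> 'p set" where
  "postT N t = {p. (t, p) \<in> arcs_tp N}"

definition pnet_wf :: "('p,'t) pnet \<Rightarrow> bool" where
  "pnet_wf N \<longleftrightarrow> finite (places N) \<and> finite (trans N)
     \<and> arcs_pt N \<subseteq> places N \<times> trans N \<and> arcs_tp N \<subseteq> trans N \<times> places N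
     \<and> (\<forall>t \<in> trans N. preT N t \<noteq> {})"

type_synonym 'p marking = "'p \<Rightarrow> nat"

definition enabled :: "('p,'t) pnet \<Rightarrow> 'p marking \<Rightarrow> 't \<Rightarrow> bool" where
  "enabled N M t \<longleftrightarrow> t \<in> trans N \<and> (\<forall>p \<in> preT N t. M p \<ge> 1)"

definition fire :: "('p,'t) pnet \<Rightarrow> 'p marking \<Rightarrow> 't \<Rightarrow> 'p marking" where
  "fire N M t = (\<lambda>p. M p - (if p \<in> preT N t then 1 else 0) + (if p \<in> postT N t then 1 else 0))"

inductive_set reach :: "('p,'t) pnet \<Rightarrow> 'p marking \<Rightarrow> 'p marking set"
  for N :: "('p,'t) pnet" and M0 :: "'p marking" where
  init: "M0 \<in> reach N M0"
| step: "M \<in> reach N M0 \<Longrightarrow> enabled N M t \<Longrightarrow> fire N M t \<in> reach N M0"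

definition net_system :: "('p,'t) pnet \<Rightarrow> 'p marking \<Rightarrow> bool" where
  "net_system N M0 \<longleftrightarrow> pnet_wf N \<and> (\<forall>p. p \<notin> places N \<longrightarrow> M0 p = 0)"

definition one_safe :: "('p,'t) pnet \<Rightarrow> 'p marking \<Rightarrow> bool" where
  "one_safe N M0 \<longleftrightarrow> (\<forall>M \<in> reach N M0. \<forall>p. M p \<le> 1)"

definition tar :: "('p,'t) pnet \<Rightarrow> 'p marking \<Rightarrow> 't \<Rightarrow> 't \<Rightarrow> bool" where
  "tar N M0 t1 t2 \<longleftrightarrow>
     (\<exists>Ms \<in> reach N M0. enabled N Ms t1 \<and> enabled N (fire N Ms t1) t2)"

record ('b,'e) onet =
  conds :: "'b set"
  events :: "'e set"
  arcs_be :: "('b \<times> 'e) set"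
  arcs_eb :: "('e \<times> 'b) set"

definition oflow :: "('b,'e) onet \<Rightarrow> (('b + 'e) \<times> ('b + 'e)) set" where
  "oflow Q = {(Inl b, Inr e) | b e. (b, e) \<in> arcs_be Q} \<union> {(Inr e, Inl b) | e b. (e, b) \<in> arcs_eb Q}"

definition nodes :: "('b,'e) onet \<Rightarrow> ('b + 'e) set" where
  "nodes Q = Inl ` conds Q \<union> Inr ` events Q"

definition preE :: "('b,'e) onet \<Rightarrow> 'e \<Rightarrow> 'b set" where
  "preE Q e = {b. (b, e) \<in> arcs_be Q}"

definition postE :: "('b,'e) onet \<Rightarrow> 'e \<Rightarrow> 'b set" where
  "postE Q e = {b. (e, b) \<in> arcs_eb Q}"

definition preC :: "('b,'e) onet \<Rightarrow> 'b \<Rightarrow> 'e set" where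
  "preC Q b = {e. (e, b) \<in> arcs_eb Q}"

definition causal :: "('b,'e) onet \<Rightarrow> 'b + 'e \<Rightarrow> 'b + 'e \<Rightarrow> bool" where
  "causal Q x y \<longleftrightarrow> (x, y) \<in> (oflow Q)\<^sup>+"

definition conflict :: "('b,'e) onet \<Rightarrow> 'b + 'e \<Rightarrow> 'b + 'e \<Rightarrow> bool" where
  "conflict Q x y \<longleftrightarrow> (\<exists>s e1 e2. (s, e1) \<in> arcs_be Q \<and> (s, e2) \<in> arcs_be Q \<and> e1 \<noteq> e2
       \<and> (Inr e1, x) \<in> (oflow Q)\<^sup>* \<and> (Inr e2, y) \<in> (oflow Q)\<^sup>*)"

text \<open>x co y: none of x < y, y < x, x # y (literal definition; reflexive on non-self-conflicting nodes).\<close>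
definition co :: "('b,'e) onet \<Rightarrow> 'b + 'e \<Rightarrow> 'b + 'e \<Rightarrow> bool" where
  "co Q x y \<longleftrightarrow> \<not> causal Q x y \<and> \<not> causal Q y x \<and> \<not> conflict Q x y"

definition occ_net :: "('b,'e) onet \<Rightarrow> bool" where
  "occ_net Q \<longleftrightarrow> arcs_be Q \<subseteq> conds Q \<times> events Q \<and> arcs_eb Q \<subseteq> events Q \<times> conds Q
     \<and> (\<forall>b e1 e2. (e1, b) \<in> arcs_eb Q \<and> (e2, b) \<in> arcs_eb Q \<longrightarrow> e1 = e2)
     \<and> (\<forall>x. \<not> causal Q x x)
     \<and> (\<forall>x \<in> nodes Q. finite {y. causal Q y x})
     \<and> (\<forall>x. \<not> conflict Q x x)"

definition minC :: "('b,'e) onet \<Rightarrow> 'b set" where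
  "minC Q = {b \<in> conds Q. preC Q b = {}}"

definition bproc :: "('p,'t) pnet \<Rightarrow> 'p marking \<Rightarrow> ('b,'e) onet \<Rightarrow> ('b \<Rightarrow> 'p) \<Rightarrow> ('e \<Rightarrow> 't) \<Rightarrow> bool" where
  "bproc N M0 Q hC hE \<longleftrightarrow> occ_net Q
     \<and> hC ` conds Q \<subseteq> places N \<and> hE ` events Q \<subseteq> trans N
     \<and> (\<forall>e \<in> events Q. bij_betw hC (preE Q e) (preT N (hE e))
                      \<and> bij_betw hC (postE Q e) (postT N (hE e)))
     \<and> finite (minC Q) \<and> (\<forall>p. card {b \<in> minC Q. hC b = p} = M0 p)
     \<and> (\<forall>e1 \<in> events Q. \<forall>e2 \<in> events Q. preE Q e1 = preE Q e2 \<and> hE e1 = hE e2 \<longrightarrow> e1 = e2)"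

definition co_set :: "('b,'e) onet \<Rightarrow> 'b set \<Rightarrow> bool" where
  "co_set Q X \<longleftrightarrow> X \<subseteq> conds Q \<and> (\<forall>x \<in> X. \<forall>y \<in> X. x \<noteq> y \<longrightarrow> co Q (Inl x) (Inl y))"

text \<open>The unfolding: the (up to isomorphism unique) maximal branching process, characterised as
  a branching process that already contains every possible extension.\<close>
definition is_unfolding :: "('p,'t) pnet \<Rightarrow> 'p marking \<Rightarrow> ('b,'e) onet \<Rightarrow> ('b \<Rightarrow> 'p) \<Rightarrow> ('e \<Rightarrow> 't) \<Rightarrow> bool" where
  "is_unfolding N M0 Q hC hE \<longleftrightarrow> bproc N M0 Q hC hE
     \<and> (\<forall>t \<in> trans N. \<forall>X. co_set Q X \<and> bij_betw hC X (preT N t)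
            \<longrightarrow> (\<exists>e \<in> events Q. preE Q e = X \<and> hE e = t))"

definition configuration :: "('b,'e) onet \<Rightarrow> 'e set \<Rightarrow> bool" where
  "configuration Q Cf \<longleftrightarrow> Cf \<subseteq> events Q
     \<and> (\<forall>e \<in> Cf. \<forall>e' \<in> events Q. causal Q (Inr e') (Inr e) \<longrightarrow> e' \<in> Cf)
     \<and> (\<forall>e \<in> Cf. \<forall>e' \<in> Cf. \<not> conflict Q (Inr e) (Inr e'))"

definition fconf :: "('b,'e) onet \<Rightarrow> 'e set \<Rightarrow> bool" where
  "fconf Q Cf \<longleftrightarrow> configuration Q Cf \<and> finite Cf"

definition local_config :: "('b,'e) onet \<Rightarrow> 'e \<Rightarrow> 'e set" where
  "local_config Q e = {e' \<in> events Q. e' = e \<or> causal Q (Inr e') (Inr e)}"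

definition cut :: "('b,'e) onet \<Rightarrow> 'e set \<Rightarrow> 'b set" where
  "cut Q Cf = (minC Q \<union> (\<Union>e \<in> Cf. postE Q e)) - (\<Union>e \<in> Cf. preE Q e)"

definition mark :: "('b,'e) onet \<Rightarrow> ('b \<Rightarrow> 'p) \<Rightarrow> 'e set \<Rightarrow> 'p marking" where
  "mark Q hC Cf = (\<lambda>p. card {b \<in> cut Q Cf. hC b = p})"

definition fut_conds :: "('b,'e) onet \<Rightarrow> 'e set \<Rightarrow> 'b set" where
  "fut_conds Q Cf = {b \<in> conds Q. b \<notin> (\<Union>e \<in> Cf. preE Q e)
                        \<and> (\<forall>e \<in> Cf. \<not> conflict Q (Inl b) (Inr e))}"

definition fut_events :: "('b,'e) onet \<Rightarrow> 'e set \<Rightarrow> 'e set" where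
  "fut_events Q Cf = {e \<in> events Q. e \<notin> Cf \<and> (\<forall>e' \<in> Cf. \<not> conflict Q (Inr e) (Inr e'))}"

definition fut_iso :: "('b,'e) onet \<Rightarrow> ('b \<Rightarrow> 'p) \<Rightarrow> ('e \<Rightarrow> 't) \<Rightarrow> 'e set \<Rightarrow> 'e set
                        \<Rightarrow> ('b \<Rightarrow> 'b) \<Rightarrow> ('e \<Rightarrow> 'e) \<Rightarrow> bool" where
  "fut_iso Q hC hE C1 C2 fB fE \<longleftrightarrow>
     bij_betw fB (fut_conds Q C1) (fut_conds Q C2) \<and> bij_betw fE (fut_events Q C1) (fut_events Q C2)
     \<and> (\<forall>b \<in> fut_conds Q C1. hC (fB b) = hC b) \<and> (\<forall>e \<in> fut_events Q C1. hE (fE e) = hE e)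
     \<and> (\<forall>b \<in> fut_conds Q C1. \<forall>e \<in> fut_events Q C1.
          ((b, e) \<in> arcs_be Q \<longleftrightarrow> (fB b, fE e) \<in> arcs_be Q)
        \<and> ((e, b) \<in> arcs_eb Q \<longleftrightarrow> (fE e, fB b) \<in> arcs_eb Q))"

definition adequate_order :: "('b,'e) onet \<Rightarrow> ('b \<Rightarrow> 'p) \<Rightarrow> ('e \<Rightarrow> 't) \<Rightarrow> ('e set \<Rightarrow> 'e set \<Rightarrow> bool) \<Rightarrow> bool" where
  "adequate_order Q hC hE R \<longleftrightarrow>
     (\<forall>C1 C2. R C1 C2 \<longrightarrow> fconf Q C1 \<and> fconf Q C2)
     \<and> (\<forall>C. \<not> R C C) \<and> (\<forall>C1 C2 C3. R C1 C2 \<longrightarrow> R C2 C3 \<longrightarrow> R C1 C3)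
     \<and> wf {(C1, C2). R C1 C2}
     \<and> (\<forall>C1 C2. fconf Q C1 \<and> fconf Q C2 \<and> C1 \<subset> C2 \<longrightarrow> R C1 C2)
     \<and> (\<forall>C1 C2. R C1 C2 \<and> mark Q hC C1 = mark Q hC C2 \<longrightarrow>
          (\<forall>fB fE. fut_iso Q hC hE C1 C2 fB fE \<longrightarrow>
             (\<forall>X. finite X \<and> X \<subseteq> fut_events Q C1 \<and> configuration Q (C1 \<union> X)
                  \<longrightarrow> R (C1 \<union> X) (C2 \<union> fE ` X))))"

definition cutoff :: "('b,'e) onet \<Rightarrow> ('b \<Rightarrow> 'p) \<Rightarrow> ('e set \<Rightarrow> 'e set \<Rightarrow> bool) \<Rightarrow> 'e \<Rightarrow> bool" where
  "cutoff Q hC R e \<longleftrightarrow> e \<in> events Q \<and>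
     (\<exists>e' \<in> events Q. mark Q hC (local_config Q e') = mark Q hC (local_config Q e)
                     \<and> R (local_config Q e') (local_config Q e))"

text \<open>Complete prefix: greatest backward closed subnet containing no event after a cut-off event.\<close>
definition prefix_events :: "('b,'e) onet \<Rightarrow> ('b \<Rightarrow> 'p) \<Rightarrow> ('e set \<Rightarrow> 'e set \<Rightarrow> bool) \<Rightarrow> 'e set" where
  "prefix_events Q hC R =
     {e \<in> events Q. \<not> (\<exists>e' \<in> events Q. cutoff Q hC R e' \<and> causal Q (Inr e') (Inr e))}"

definition prefix_conds :: "('b,'e) onet \<Rightarrow> ('b \<Rightarrow> 'p) \<Rightarrow> ('e set \<Rightarrow> 'e set \<Rightarrow> bool) \<Rightarrow> 'b set" where
  "prefix_conds Q hC R = {b \<in> conds Q. \<forall>e. (e, b) \<in> arcs_eb Q \<longrightarrow> e \<in> prefix_events Q hC R}"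

definition prefix_net :: "('b,'e) onet \<Rightarrow> ('b \<Rightarrow> 'p) \<Rightarrow> ('e set \<Rightarrow> 'e set \<Rightarrow> bool) \<Rightarrow> ('b,'e) onet" where
  "prefix_net Q hC R =
     \<lparr>conds = prefix_conds Q hC R, events = prefix_events Q hC R,
      arcs_be = arcs_be Q \<inter> (prefix_conds Q hC R \<times> prefix_events Q hC R),
      arcs_eb = arcs_eb Q \<inter> (prefix_events Q hC R \<times> prefix_conds Q hC R)\<rparr>"

end

theory Submission imports Defs begin

locale unf =
  fixes N :: "('p,'t) pnet" and M0 :: "'p marking" and Q :: "('b,'e) onet"
    and hC :: "'b \<Rightarrow> 'p" and hE :: "'e \<Rightarrow> 't"
  assumes ns: "net_system N M0" and os: "one_safe N M0" and unf: "is_unfolding N M0 Q hC hE"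
begin

abbreviation "F \<equiv> oflow Q"

lemma bp: "bproc N M0 Q hC hE" using unf by (simp add: is_unfolding_def)
lemma occ: "occ_net Q" using bp by (simp add: bproc_def)
lemma be_sub: "arcs_be Q \<subseteq> conds Q \<times> events Q" using occ by (simp add: occ_net_def)
lemma eb_sub: "arcs_eb Q \<subseteq> events Q \<times> conds Q" using occ by (simp add: occ_net_def)
lemma in_uniq: "(e1,b) \<in> arcs_eb Q \<Longrightarrow> (e2,b) \<in> arcs_eb Q \<Longrightarrow> e1 = e2"
proof -
  have "\<forall>b e1 e2. (e1, b) \<in> arcs_eb Q \<and> (e2, b) \<in> arcs_eb Q \<longrightarrow> e1 = e2"
    using occ by (simp add: occ_net_def)
  then show "(e1,b) \<in> arcs_eb Q \<Longrightarrow> (e2,b) \<in> arcs_eb Q \<Longrightarrow> e1 = e2" by blast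
qed
lemma acyc: "\<not> causal Q x x" using occ by (simp add: occ_net_def)
lemma finpast: "x \<in> nodes Q \<Longrightarrow> finite {y. causal Q y x}" using occ by (simp add: occ_net_def)
lemma nsc: "\<not> conflict Q x x" using occ by (simp add: occ_net_def)
lemma bij_pre: "e \<in> events Q \<Longrightarrow> bij_betw hC (preE Q e) (preT N (hE e))"
  using bp by (simp add: bproc_def)
lemma bij_post: "e \<in> events Q \<Longrightarrow> bij_betw hC (postE Q e) (postT N (hE e))"
  using bp by (simp add: bproc_def)
lemma hE_tr: "e \<in> events Q \<Longrightarrow> hE e \<in> trans N" using bp by (auto simp: bproc_def)
lemma fin_minC: "finite (minC Q)" using bp by (simp add: bproc_def)
lemma card_minC: "card {b \<in> minC Q. hC b = p} = M0 p" using bp by (simp add: bproc_def)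
lemma uniq_ev: "e1 \<in> events Q \<Longrightarrow> e2 \<in> events Q \<Longrightarrow> preE Q e1 = preE Q e2 \<Longrightarrow> hE e1 = hE e2 \<Longrightarrow> e1 = e2"
  using bp by (simp add: bproc_def)
lemma sat: "t \<in> trans N \<Longrightarrow> co_set Q X \<Longrightarrow> bij_betw hC X (preT N t) \<Longrightarrow> \<exists>e\<in>events Q. preE Q e = X \<and> hE e = t"
  using unf by (simp add: is_unfolding_def)
lemma wfN: "pnet_wf N" using ns by (simp add: net_system_def)
lemma preT_ne: "t \<in> trans N \<Longrightarrow> preT N t \<noteq> {}" using wfN by (simp add: pnet_wf_def)
lemma preE_ne: "e \<in> events Q \<Longrightarrow> preE Q e \<noteq> {}"
  using bij_pre[of e] preT_ne[OF hE_tr[of e]] by (auto simp: bij_betw_def)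
lemma finite_postT: "finite (postT N t)"
proof -
  have "postT N t \<subseteq> places N" using wfN by (auto simp: pnet_wf_def postT_def)
  thus ?thesis using wfN finite_subset by (auto simp: pnet_wf_def)
qed
lemma finite_postE: "e \<in> events Q \<Longrightarrow> finite (postE Q e)"
  using bij_post[of e] finite_postT bij_betw_finite by blast

lemma F_simps[simp]: "(Inl b, Inr e) \<in> F \<longleftrightarrow> (b,e) \<in> arcs_be Q" "(Inr e, Inl b) \<in> F \<longleftrightarrow> (e,b) \<in> arcs_eb Q"
  "(Inl b, Inl b') \<notin> F" "(Inr e, Inr e') \<notin> F" by (auto simp: oflow_def)

lemma F_into_Inl: "(x, Inl b) \<in> F \<Longrightarrow> \<exists>e. x = Inr e \<and> (e,b) \<in> arcs_eb Q" by (auto simp: oflow_def)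
lemma F_into_Inr: "(x, Inr e) \<in> F \<Longrightarrow> \<exists>b. x = Inl b \<and> (b,e) \<in> arcs_be Q" by (auto simp: oflow_def)
lemma F_from_Inl: "(Inl b, y) \<in> F \<Longrightarrow> \<exists>e. y = Inr e \<and> (b,e) \<in> arcs_be Q" by (auto simp: oflow_def)
lemma F_from_Inr: "(Inr e, y) \<in> F \<Longrightarrow> \<exists>b. y = Inl b \<and> (e,b) \<in> arcs_eb Q" by (auto simp: oflow_def)

lemma tr_Inl: "(x, Inl b) \<in> F\<^sup>+ \<Longrightarrow> \<exists>e. (e,b) \<in> arcs_eb Q \<and> (x, Inr e) \<in> F\<^sup>*"
proof -
  assume "(x, Inl b) \<in> F\<^sup>+"
  from tranclD2[OF this] obtain z where "(x,z) \<in> F\<^sup>*" "(z, Inl b) \<in> F" by blast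
  then show ?thesis using F_into_Inl by blast
qed
lemma tr_Inr: "(x, Inr e) \<in> F\<^sup>+ \<Longrightarrow> \<exists>b. (b,e) \<in> arcs_be Q \<and> (x, Inl b) \<in> F\<^sup>*"
proof -
  assume "(x, Inr e) \<in> F\<^sup>+"
  from tranclD2[OF this] obtain z where "(x,z) \<in> F\<^sup>*" "(z, Inr e) \<in> F" by blast
  then show ?thesis using F_into_Inr by blast
qed
lemma tr_from_Inl: "(Inl b, y) \<in> F\<^sup>+ \<Longrightarrow> \<exists>e. (b,e) \<in> arcs_be Q \<and> (Inr e, y) \<in> F\<^sup>*"
proof -
  assume "(Inl b, y) \<in> F\<^sup>+"
  from tranclD[OF this] obtain z where "(Inl b,z) \<in> F" "(z, y) \<in> F\<^sup>*" by blast
  then show ?thesis using F_from_Inl by blast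
qed
lemma tr_from_Inr_ev: "(Inr c, y) \<in> F\<^sup>+ \<Longrightarrow> c \<in> events Q"
proof -
  assume "(Inr c, y) \<in> F\<^sup>+"
  from tranclD[OF this] obtain z where "(Inr c,z) \<in> F" by blast
  then obtain b where "(c,b) \<in> arcs_eb Q" using F_from_Inr by blast
  then show ?thesis using eb_sub by blast
qed

lemma rt_Inr_Inr: "(Inr c, Inr e) \<in> F\<^sup>* \<Longrightarrow> c = e \<or> causal Q (Inr c) (Inr e)"
  by (auto simp: causal_def rtrancl_eq_or_trancl)

lemma rt_Inr_Inl: "(Inr c, Inl b) \<in> F\<^sup>* \<Longrightarrow> \<exists>e. (e,b) \<in> arcs_eb Q \<and> (Inr c, Inr e) \<in> F\<^sup>*"
proof -
  assume "(Inr c, Inl b) \<in> F\<^sup>*"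
  then have "(Inr c, Inl b) \<in> F\<^sup>+" by (simp add: rtrancl_eq_or_trancl)
  then show ?thesis using tr_Inl by blast
qed
lemma rt_Inr_Inr': "(Inr c, Inr e) \<in> F\<^sup>* \<Longrightarrow> c = e \<or> (\<exists>b. (b,e) \<in> arcs_be Q \<and> (Inr c, Inl b) \<in> F\<^sup>*)"
proof -
  assume "(Inr c, Inr e) \<in> F\<^sup>*"
  then have "c = e \<or> (Inr c, Inr e) \<in> F\<^sup>+" by (auto simp add: rtrancl_eq_or_trancl)
  then show ?thesis using tr_Inr by blast
qed

lemma cf_sym: "conflict Q x y \<Longrightarrow> conflict Q y x" unfolding conflict_def by blast
lemma cf_fwd: "conflict Q x y \<Longrightarrow> (y, z) \<in> F\<^sup>* \<Longrightarrow> conflict Q x z"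
proof -
  assume c: "conflict Q x y" and yz: "(y, z) \<in> F\<^sup>*"
  from c obtain s e1 e2 where h: "(s, e1) \<in> arcs_be Q" "(s, e2) \<in> arcs_be Q" "e1 \<noteq> e2"
       "(Inr e1, x) \<in> F\<^sup>*" "(Inr e2, y) \<in> F\<^sup>*" unfolding conflict_def by blast
  have "(Inr e2, z) \<in> F\<^sup>*" using h(5) yz by (rule rtrancl_trans)
  then show ?thesis unfolding conflict_def using h(1-4) by (intro exI[of _ s] exI[of _ e1] exI[of _ e2]) simp
qed
lemma cf_fwd1: "conflict Q x y \<Longrightarrow> (x, z) \<in> F\<^sup>* \<Longrightarrow> conflict Q z y"
proof -
  assume a: "conflict Q x y" "(x, z) \<in> F\<^sup>*"
  have "conflict Q y z" by (rule cf_fwd[OF cf_sym[OF a(1)] a(2)])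
  then show ?thesis by (rule cf_sym)
qed

lemma conf_closed: "configuration Q D \<Longrightarrow> e \<in> D \<Longrightarrow> (Inr c, Inr e) \<in> F\<^sup>* \<Longrightarrow> c \<in> D"
proof -
  assume a: "configuration Q D" "e \<in> D" "(Inr c, Inr e) \<in> F\<^sup>*"
  show ?thesis
  proof (cases "c = e")
    case True then show ?thesis using a by simp
  next
    case False
    then have h: "causal Q (Inr c) (Inr e)" using rt_Inr_Inr a(3) by blast
    then have "c \<in> events Q" unfolding causal_def by (rule tr_from_Inr_ev)
    have "\<forall>e \<in> D. \<forall>e' \<in> events Q. causal Q (Inr e') (Inr e) \<longrightarrow> e' \<in> D"
      using a(1) by (simp add: configuration_def)
    then show ?thesis using a(2) h \<open>c \<in> events Q\<close> by blast
  qed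
qed
lemma conf_cf: "configuration Q D \<Longrightarrow> e1 \<in> D \<Longrightarrow> e2 \<in> D \<Longrightarrow> \<not> conflict Q (Inr e1) (Inr e2)"
  by (simp add: configuration_def)
lemma conf_ev: "configuration Q D \<Longrightarrow> D \<subseteq> events Q" by (simp add: configuration_def)

lemma cut_cond_in: "b \<in> cut Q D \<Longrightarrow> (e,b) \<in> arcs_eb Q \<Longrightarrow> e \<in> D"
proof -
  assume a: "b \<in> cut Q D" "(e,b) \<in> arcs_eb Q"
  then have "b \<notin> minC Q" by (auto simp: minC_def preC_def)
  with a obtain d where "d \<in> D" "(d,b) \<in> arcs_eb Q" by (auto simp: cut_def postE_def)
  then show ?thesis using in_uniq a by blast
qed
lemma cut_conds: "configuration Q D \<Longrightarrow> cut Q D \<subseteq> conds Q"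
  unfolding cut_def minC_def postE_def configuration_def using eb_sub by auto
lemma cut_not_pre: "b \<in> cut Q D \<Longrightarrow> d \<in> D \<Longrightarrow> (b,d) \<notin> arcs_be Q"
  unfolding cut_def preE_def by blast

lemma cut_co: assumes "configuration Q D" shows "co_set Q (cut Q D)"
  unfolding co_set_def
proof (intro conjI ballI impI)
  show "cut Q D \<subseteq> conds Q" using cut_conds assms by blast
  fix b1 b2 assume b1: "b1 \<in> cut Q D" and b2: "b2 \<in> cut Q D" and "b1 \<noteq> b2"
  have nc: "\<not> causal Q (Inl x) (Inl y)" if x: "x \<in> cut Q D" and y: "y \<in> cut Q D" for x y
  proof
    assume "causal Q (Inl x) (Inl y)"
    then obtain e where e: "(e,y) \<in> arcs_eb Q" "(Inl x, Inr e) \<in> F\<^sup>*"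
      using tr_Inl causal_def by metis
    then have "(Inl x, Inr e) \<in> F\<^sup>+" by (metis rtrancl_eq_or_trancl sum.distinct(1))
    then obtain c where c: "(x,c) \<in> arcs_be Q" "(Inr c, Inr e) \<in> F\<^sup>*" using tr_from_Inl by blast
    have "e \<in> D" using cut_cond_in y e by blast
    then have "c \<in> D" using conf_closed assms c by blast
    then show False using cut_not_pre x c by blast
  qed
  show "co Q (Inl b1) (Inl b2)" unfolding co_def
  proof (intro conjI)
    show "\<not> causal Q (Inl b1) (Inl b2)" "\<not> causal Q (Inl b2) (Inl b1)" using nc b1 b2 by auto
    show "\<not> conflict Q (Inl b1) (Inl b2)"
    proof
      assume "conflict Q (Inl b1) (Inl b2)"
      then obtain s c1 c2 where s: "(s,c1) \<in> arcs_be Q" "(s,c2) \<in> arcs_be Q" "c1 \<noteq> c2"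
        "(Inr c1, Inl b1) \<in> F\<^sup>*" "(Inr c2, Inl b2) \<in> F\<^sup>*" unfolding conflict_def by blast
      obtain e1 where e1: "(e1,b1) \<in> arcs_eb Q" "(Inr c1, Inr e1) \<in> F\<^sup>*" using rt_Inr_Inl s by blast
      obtain e2 where e2: "(e2,b2) \<in> arcs_eb Q" "(Inr c2, Inr e2) \<in> F\<^sup>*" using rt_Inr_Inl s by blast
      have "c1 \<in> D" "c2 \<in> D" using cut_cond_in conf_closed assms b1 b2 e1 e2 by blast+
      moreover have "conflict Q (Inr c1) (Inr c2)" unfolding conflict_def using s by blast
      ultimately show False using conf_cf assms by blast
    qed
  qed
qed

lemma nodes_Inr: "e \<in> events Q \<Longrightarrow> Inr e \<in> nodes Q" by (simp add: nodes_def)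

lemma cf_new:
  assumes D: "configuration Q D" and pre: "preE Q e \<subseteq> cut Q D"
    and closed: "\<And>c. causal Q (Inr c) (Inr e) \<Longrightarrow> c \<in> D" and d: "d \<in> D"
  shows "\<not> conflict Q (Inr e) (Inr d)"
proof
  assume "conflict Q (Inr e) (Inr d)"
  then obtain s c1 c2 where h: "(s, c1) \<in> arcs_be Q" "(s, c2) \<in> arcs_be Q" "c1 \<noteq> c2"
       "(Inr c1, Inr e) \<in> F\<^sup>*" "(Inr c2, Inr d) \<in> F\<^sup>*" unfolding conflict_def by blast
  have c2: "c2 \<in> D" using conf_closed[OF D d h(5)] .
  show False
  proof (cases "c1 = e")
    case True
    then have "s \<in> cut Q D" using pre h(1) by (auto simp: preE_def)
    then show False using cut_not_pre c2 h(2) by blast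
  next
    case False
    then have "causal Q (Inr c1) (Inr e)" using rt_Inr_Inr h(4) by blast
    then have "c1 \<in> D" by (rule closed)
    moreover have "conflict Q (Inr c1) (Inr c2)" unfolding conflict_def using h(1-3)
      by (intro exI[of _ s] exI[of _ c1] exI[of _ c2]) simp
    ultimately show False using conf_cf[OF D _ c2] by blast
  qed
qed

lemma ext:
  assumes D: "configuration Q D" and e: "e \<in> events Q" and pre: "preE Q e \<subseteq> cut Q D"
  shows "e \<notin> D" "\<And>c. causal Q (Inr c) (Inr e) \<Longrightarrow> c \<in> D" "configuration Q (insert e D)"
    "cut Q (insert e D) = (cut Q D - preE Q e) \<union> postE Q e"
proof -
  obtain b0 where b0: "b0 \<in> preE Q e" using preE_ne[OF e] by blast
  show ne: "e \<notin> D"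
  proof
    assume "e \<in> D"
    moreover have "b0 \<in> cut Q D" using pre b0 by blast
    ultimately have "(b0,e) \<notin> arcs_be Q" using cut_not_pre by blast
    then show False using b0 by (simp add: preE_def)
  qed
  show closed: "c \<in> D" if h: "causal Q (Inr c) (Inr e)" for c
  proof -
    obtain b where b: "(b,e) \<in> arcs_be Q" "(Inr c, Inl b) \<in> F\<^sup>*" using tr_Inr[OF h[unfolded causal_def]] by blast
    obtain d where d: "(d,b) \<in> arcs_eb Q" "(Inr c, Inr d) \<in> F\<^sup>*" using rt_Inr_Inl b(2) by blast
    have "b \<in> cut Q D" using pre b(1) by (auto simp: preE_def)
    then have "d \<in> D" using cut_cond_in d(1) by blast
    then show ?thesis using conf_closed[OF D _ d(2)] by blast
  qed
  have Dc: "\<forall>x \<in> D. \<forall>e' \<in> events Q. causal Q (Inr e') (Inr x) \<longrightarrow> e' \<in> D"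
    using D by (simp add: configuration_def)
  show "configuration Q (insert e D)" unfolding configuration_def
  proof (intro conjI ballI impI)
    show "insert e D \<subseteq> events Q" using e conf_ev[OF D] by blast
  next
    fix x e' assume x: "x \<in> insert e D" and e': "e' \<in> events Q" "causal Q (Inr e') (Inr x)"
    show "e' \<in> insert e D"
    proof (cases "x = e")
      case True then show ?thesis using closed e' by blast
    next
      case False then have "x \<in> D" using x by blast
      then show ?thesis using Dc e' by blast
    qed
  next
    fix x y assume x: "x \<in> insert e D" and y: "y \<in> insert e D"
    have cn: "\<not> conflict Q (Inr e) (Inr d)" if "d \<in> D" for d
      using cf_new[OF D pre closed that] .
    show "\<not> conflict Q (Inr x) (Inr y)"
    proof (cases "x = e")
      case True
      show ?thesis
      proof (cases "y = e")
        case True then show ?thesis using \<open>x = e\<close> nsc by simp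
      next
        case False then show ?thesis using \<open>x = e\<close> cn y by blast
      qed
    next
      case False
      then have xD: "x \<in> D" using x by blast
      show ?thesis
      proof (cases "y = e")
        case True then show ?thesis using cn[OF xD] cf_sym by blast
      next
        case False then show ?thesis using conf_cf[OF D xD] y by blast
      qed
    qed
  qed
  have d1: "postE Q e \<inter> preE Q e = {}"
  proof (rule ccontr)
    assume "postE Q e \<inter> preE Q e \<noteq> {}"
    then obtain b where "(e,b) \<in> arcs_eb Q" "(b,e) \<in> arcs_be Q" by (auto simp: preE_def postE_def)
    then have "(Inr e, Inl b) \<in> F" "(Inl b, Inr e) \<in> F" by simp_all
    then have "causal Q (Inr e) (Inr e)" unfolding causal_def by (meson trancl.simps)
    then show False using acyc by blast
  qed
  have d2: "postE Q e \<inter> preE Q d = {}" if "d \<in> D" for d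
  proof (rule ccontr)
    assume "postE Q e \<inter> preE Q d \<noteq> {}"
    then obtain b where "(e,b) \<in> arcs_eb Q" "(b,d) \<in> arcs_be Q" by (auto simp: preE_def postE_def)
    then have "(Inr e, Inl b) \<in> F" "(Inl b, Inr d) \<in> F" by simp_all
    then have "causal Q (Inr e) (Inr d)" unfolding causal_def by (meson trancl.simps)
    then have "e \<in> D" using Dc that e by blast
    then show False using ne by blast
  qed
  show "cut Q (insert e D) = (cut Q D - preE Q e) \<union> postE Q e"
    unfolding cut_def using d1 d2 by auto
qed

lemma card_fiber: assumes "bij_betw f A B" shows "card {x\<in>A. f x = p} = (if p \<in> B then 1 else 0)"
proof (cases "p \<in> B")
  case True
  then obtain a where a: "a \<in> A" "f a = p" using assms by (auto simp: bij_betw_def)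
  have "{x\<in>A. f x = p} = {a}" using a assms by (auto simp: bij_betw_def inj_on_def)
  then show ?thesis using True by simp
next
  case False
  then have h: "{x\<in>A. f x = p} = {}" using assms by (auto simp: bij_betw_def)
  show ?thesis using False by (simp only: h card.empty if_False)
qed

lemma finite_cut: assumes "configuration Q D" "finite D" shows "finite (cut Q D)"
proof -
  have "cut Q D \<subseteq> minC Q \<union> (\<Union>e\<in>D. postE Q e)" by (auto simp: cut_def)
  moreover have "finite (\<Union>e\<in>D. postE Q e)" using assms conf_ev[OF assms(1)] finite_postE by blast
  ultimately show ?thesis using fin_minC finite_subset by blast
qed

lemma mark_ext:
  assumes D: "configuration Q D" "finite D" and e: "e \<in> events Q" and pre: "preE Q e \<subseteq> cut Q D"
  shows "mark Q hC (insert e D) = fire N (mark Q hC D) (hE e)" "enabled N (mark Q hC D) (hE e)"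
proof -
  have fc: "finite (cut Q D)" using finite_cut D by blast
  have pc: "postE Q e \<inter> cut Q D = {}"
  proof (rule ccontr)
    assume "postE Q e \<inter> cut Q D \<noteq> {}"
    then obtain b where "(e,b) \<in> arcs_eb Q" "b \<in> cut Q D" by (auto simp: postE_def)
    then have "e \<in> D" using cut_cond_in by blast
    then show False using ext(1)[OF D(1) e pre] by blast
  qed
  show "mark Q hC (insert e D) = fire N (mark Q hC D) (hE e)"
  proof
    fix p
    define A where "A = {b \<in> cut Q D. hC b = p}"
    define A1 where "A1 = {b \<in> preE Q e. hC b = p}"
    define A2 where "A2 = {b \<in> postE Q e. hC b = p}"
    have fA: "finite A" using fc by (simp add: A_def)
    have A1A: "A1 \<subseteq> A" using pre by (auto simp: A_def A1_def)
    have fA2: "finite A2" using finite_postE[OF e] by (simp add: A2_def)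
    have eq: "{b \<in> (cut Q D - preE Q e) \<union> postE Q e. hC b = p} = (A - A1) \<union> A2"
      by (auto simp: A_def A1_def A2_def)
    have dis: "(A - A1) \<inter> A2 = {}" using pc by (auto simp: A_def A2_def)
    have "card ((A - A1) \<union> A2) = card A - card A1 + card A2"
      using card_Un_disjoint[OF _ fA2 dis] fA card_Diff_subset[OF finite_subset[OF A1A fA] A1A] by simp
    moreover have "card A1 = (if p \<in> preT N (hE e) then 1 else 0)" unfolding A1_def
      by (rule card_fiber[OF bij_pre[OF e]])
    moreover have "card A2 = (if p \<in> postT N (hE e) then 1 else 0)" unfolding A2_def
      by (rule card_fiber[OF bij_post[OF e]])
    ultimately show "mark Q hC (insert e D) p = fire N (mark Q hC D) (hE e) p"
      unfolding mark_def fire_def ext(4)[OF D(1) e pre] eq by (simp add: A_def)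
  qed
  show "enabled N (mark Q hC D) (hE e)" unfolding enabled_def
  proof (intro conjI ballI)
    show "hE e \<in> trans N" using hE_tr[OF e] .
    fix p assume p: "p \<in> preT N (hE e)"
    have "card {b \<in> preE Q e. hC b = p} = 1" using card_fiber[OF bij_pre[OF e], of p] p by simp
    moreover have "{b \<in> preE Q e. hC b = p} \<subseteq> {b \<in> cut Q D. hC b = p}" using pre by auto
    moreover have "finite {b \<in> cut Q D. hC b = p}" using fc by simp
    ultimately have "1 \<le> card {b \<in> cut Q D. hC b = p}" by (metis card_mono)
    then show "1 \<le> mark Q hC D p" by (simp add: mark_def)
  qed
qed

lemma max_ex:
  assumes "finite S" "S \<noteq> {}" "S \<subseteq> events Q"
  shows "\<exists>x\<in>S. \<forall>y\<in>S. \<not> causal Q (Inr x) (Inr y)"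
proof -
  define f where "f x = card {z. causal Q z (Inr x)}" for x
  have "Max (f ` S) \<in> f ` S" using assms by simp
  then obtain x where x: "x \<in> S" "f x = Max (f ` S)" by (metis imageE)
  show ?thesis
  proof (intro bexI[OF _ x(1)] ballI notI)
    fix y assume y: "y \<in> S" and c: "causal Q (Inr x) (Inr y)"
    have sub: "{z. causal Q z (Inr x)} \<subset> {z. causal Q z (Inr y)}"
    proof
      show "{z. causal Q z (Inr x)} \<subseteq> {z. causal Q z (Inr y)}"
        using c unfolding causal_def by (auto intro: trancl_trans)
      show "{z. causal Q z (Inr x)} \<noteq> {z. causal Q z (Inr y)}" using c acyc by blast
    qed
    have "finite {z. causal Q z (Inr y)}" using finpast nodes_Inr y assms(3) by blast
    then have "f x < f y" unfolding f_def using psubset_card_mono sub by blast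
    moreover have "f y \<le> Max (f ` S)" using y assms(1) by simp
    ultimately show False using x(2) by simp
  qed
qed

lemma two_step: "(Inr d, Inl b) \<in> F \<Longrightarrow> (Inl b, Inr x) \<in> F \<Longrightarrow> causal Q (Inr d) (Inr x)"
  unfolding causal_def by (meson trancl.simps)

lemma max_remove:
  assumes D: "configuration Q D" and x: "x \<in> D" and mx: "\<forall>y\<in>D. \<not> causal Q (Inr x) (Inr y)"
  shows "configuration Q (D - {x})" "preE Q x \<subseteq> cut Q (D - {x})"
proof -
  have Dc: "\<forall>x \<in> D. \<forall>e' \<in> events Q. causal Q (Inr e') (Inr x) \<longrightarrow> e' \<in> D"
    using D by (simp add: configuration_def)
  show "configuration Q (D - {x})" unfolding configuration_def
  proof (intro conjI ballI impI)
    show "D - {x} \<subseteq> events Q" using conf_ev[OF D] by blast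
    fix e e' assume e: "e \<in> D - {x}" and e': "e' \<in> events Q" "causal Q (Inr e') (Inr e)"
    have "e' \<in> D" using Dc e e' by blast
    moreover have "e' \<noteq> x" using mx e e' by blast
    ultimately show "e' \<in> D - {x}" by blast
  next
    fix e e' assume "e \<in> D - {x}" "e' \<in> D - {x}"
    then show "\<not> conflict Q (Inr e) (Inr e')" using conf_cf[OF D] by blast
  qed
  show "preE Q x \<subseteq> cut Q (D - {x})"
  proof
    fix b assume b: "b \<in> preE Q x"
    then have bx: "(b,x) \<in> arcs_be Q" by (simp add: preE_def)
    then have bc: "b \<in> conds Q" using be_sub by blast
    have "b \<in> minC Q \<union> (\<Union>e\<in>D - {x}. postE Q e)"
    proof (cases "preC Q b = {}")
      case True then show ?thesis using bc by (simp add: minC_def)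
    next
      case False
      then obtain d where d: "(d,b) \<in> arcs_eb Q" by (auto simp: preC_def)
      then have "causal Q (Inr d) (Inr x)" using two_step bx by simp
      moreover have "d \<in> events Q" using d eb_sub by blast
      ultimately have "d \<in> D" "d \<noteq> x" using Dc x acyc by blast+
      then show ?thesis using d by (auto simp: postE_def)
    qed
    moreover have "b \<notin> (\<Union>e\<in>D - {x}. preE Q e)"
    proof
      assume "b \<in> (\<Union>e\<in>D - {x}. preE Q e)"
      then obtain d where d: "d \<in> D" "d \<noteq> x" "(b,d) \<in> arcs_be Q" by (auto simp: preE_def)
      have "conflict Q (Inr x) (Inr d)" unfolding conflict_def using bx d
        by (intro exI[of _ b] exI[of _ x] exI[of _ d]) simp
      then show False using conf_cf[OF D x d(1)] by blast
    qed
    ultimately show "b \<in> cut Q (D - {x})" unfolding cut_def by blast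
  qed
qed

lemma cut_empty: "cut Q {} = minC Q" by (simp add: cut_def)
lemma mark_empty: "mark Q hC {} = M0" using card_minC by (simp add: mark_def cut_empty)
lemma conf_empty: "configuration Q {}" by (simp add: configuration_def)

lemma reach_mark: "fconf Q D \<Longrightarrow> mark Q hC D \<in> reach N M0"
proof (induct "card D" arbitrary: D rule: less_induct)
  case less
  have D: "configuration Q D" "finite D" using less.prems by (auto simp: fconf_def)
  show ?case
  proof (cases "D = {}")
    case True then show ?thesis using mark_empty reach.init by simp
  next
    case False
    obtain x where x: "x \<in> D" "\<forall>y\<in>D. \<not> causal Q (Inr x) (Inr y)"
      using max_ex[OF D(2) False conf_ev[OF D(1)]] by blast
    note r = max_remove[OF D(1) x]
    have "card (D - {x}) < card D" using x(1) D(2) by (meson card_Diff1_less)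
    moreover have "fconf Q (D - {x})" using r D(2) by (simp add: fconf_def)
    ultimately have m: "mark Q hC (D - {x}) \<in> reach N M0" using less.hyps by blast
    have ins: "insert x (D - {x}) = D" using x(1) by blast
    have xe: "x \<in> events Q" using conf_ev[OF D(1)] x(1) by blast
    note me = mark_ext[OF r(1) _ xe r(2)]
    show ?thesis using reach.step[OF m me(2)] me(1) ins D(2) by simp
  qed
qed

lemma mark_le1: "fconf Q D \<Longrightarrow> mark Q hC D p \<le> 1"
  using reach_mark os by (simp add: one_safe_def)

lemma inj_cut: assumes "fconf Q D" shows "inj_on hC (cut Q D)"
proof (rule inj_onI, rule ccontr)
  fix b1 b2 assume b: "b1 \<in> cut Q D" "b2 \<in> cut Q D" "hC b1 = hC b2" "b1 \<noteq> b2"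
  have "finite (cut Q D)" using assms finite_cut by (simp add: fconf_def)
  then have "card {b1, b2} \<le> card {b \<in> cut Q D. hC b = hC b1}" using b by (intro card_mono) auto
  then have "2 \<le> mark Q hC D (hC b1)" using b(4) by (simp add: mark_def)
  then show False using mark_le1[OF assms] by (metis numeral_le_one_iff semiring_norm(69) order_trans)
qed

lemma mark_pos: assumes "fconf Q D" "b \<in> cut Q D" shows "1 \<le> mark Q hC D (hC b)"
proof -
  have "finite (cut Q D)" using assms finite_cut by (simp add: fconf_def)
  then have "card {b} \<le> card {b' \<in> cut Q D. hC b' = hC b}" using assms by (intro card_mono) auto
  then show ?thesis by (simp add: mark_def)
qed

lemma mark_pos_ex: "1 \<le> mark Q hC D p \<Longrightarrow> \<exists>b\<in>cut Q D. hC b = p"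
  unfolding mark_def by (metis (mono_tags, lifting) card.empty empty_Collect_eq not_one_le_zero)

lemma co_set_sub: "co_set Q X \<Longrightarrow> Y \<subseteq> X \<Longrightarrow> co_set Q Y" unfolding co_set_def by blast

lemma ext_exists:
  assumes D: "fconf Q D" and en: "enabled N (mark Q hC D) t"
  shows "\<exists>e\<in>events Q. hE e = t \<and> preE Q e = {b\<in>cut Q D. hC b \<in> preT N t}"
proof -
  define X where "X = {b\<in>cut Q D. hC b \<in> preT N t}"
  have cD: "configuration Q D" using D by (simp add: fconf_def)
  have co: "co_set Q X" using co_set_sub[OF cut_co[OF cD]] by (auto simp: X_def)
  have inj: "inj_on hC X" using inj_cut[OF D] by (rule inj_on_subset) (auto simp: X_def)
  have "hC ` X = preT N t"
  proof
    show "hC ` X \<subseteq> preT N t" by (auto simp: X_def)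
    show "preT N t \<subseteq> hC ` X"
    proof
      fix p assume p: "p \<in> preT N t"
      then have "1 \<le> mark Q hC D p" using en by (simp add: enabled_def)
      then obtain b where "b \<in> cut Q D" "hC b = p" using mark_pos_ex by blast
      then show "p \<in> hC ` X" using p by (auto simp: X_def)
    qed
  qed
  then have "bij_betw hC X (preT N t)" using inj by (simp add: bij_betw_def)
  moreover have "t \<in> trans N" using en by (simp add: enabled_def)
  ultimately obtain e where "e \<in> events Q" "preE Q e = X" "hE e = t" using sat co by blast
  then show ?thesis unfolding X_def by blast
qed

lemma reach_conf: "M \<in> reach N M0 \<Longrightarrow> \<exists>D. fconf Q D \<and> mark Q hC D = M"
proof (induct rule: reach.induct)
  case init
  then show ?case using conf_empty mark_empty by (intro exI[of _ "{}"]) (simp add: fconf_def)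
next
  case (step M t)
  then obtain D where D: "fconf Q D" "mark Q hC D = M" by blast
  then have en: "enabled N (mark Q hC D) t" using step by simp
  obtain e where e: "e \<in> events Q" "hE e = t" "preE Q e = {b\<in>cut Q D. hC b \<in> preT N t}"
    using ext_exists[OF D(1) en] by blast
  have cD: "configuration Q D" "finite D" using D by (auto simp: fconf_def)
  have pre: "preE Q e \<subseteq> cut Q D" using e(3) by blast
  have "fconf Q (insert e D)" using ext(3)[OF cD(1) e(1) pre] cD(2) by (simp add: fconf_def)
  moreover have "mark Q hC (insert e D) = fire N M t" using mark_ext(1)[OF cD e(1) pre] e(2) D(2) by simp
  ultimately show ?case by blast
qed

lemma cut_fut: assumes C: "configuration Q C" and b: "b \<in> cut Q C" shows "b \<in> fut_conds Q C"
  unfolding fut_conds_def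
proof (intro CollectI conjI ballI)
  show "b \<in> conds Q" using cut_conds[OF C] b by blast
  show "b \<notin> (\<Union>e\<in>C. preE Q e)" using b by (simp add: cut_def)
  fix c assume c: "c \<in> C"
  show "\<not> conflict Q (Inl b) (Inr c)"
  proof
    assume "conflict Q (Inl b) (Inr c)"
    then obtain s c1 c2 where h: "(s, c1) \<in> arcs_be Q" "(s, c2) \<in> arcs_be Q" "c1 \<noteq> c2"
       "(Inr c1, Inl b) \<in> F\<^sup>*" "(Inr c2, Inr c) \<in> F\<^sup>*" unfolding conflict_def by blast
    obtain d where d: "(d,b) \<in> arcs_eb Q" "(Inr c1, Inr d) \<in> F\<^sup>*" using rt_Inr_Inl[OF h(4)] by blast
    have "d \<in> C" using cut_cond_in b d(1) by blast
    then have c1: "c1 \<in> C" using conf_closed[OF C _ d(2)] by blast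
    have c2: "c2 \<in> C" using conf_closed[OF C c h(5)] .
    have "conflict Q (Inr c1) (Inr c2)" unfolding conflict_def using h(1-3)
      by (intro exI[of _ s] exI[of _ c1] exI[of _ c2]) simp
    then show False using conf_cf[OF C c1 c2] by blast
  qed
qed

lemma pre_fut: assumes C: "configuration Q C" and e: "e \<in> events Q" and pre: "preE Q e \<subseteq> fut_conds Q C"
  shows "e \<in> fut_events Q C"
  unfolding fut_events_def
proof (intro CollectI conjI ballI)
  show "e \<in> events Q" by fact
  obtain b0 where b0: "b0 \<in> preE Q e" using preE_ne[OF e] by blast
  show "e \<notin> C"
  proof
    assume "e \<in> C"
    then have "b0 \<in> (\<Union>e\<in>C. preE Q e)" using b0 by blast
    then show False using pre b0 by (auto simp: fut_conds_def)
  qed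
  fix c assume c: "c \<in> C"
  show "\<not> conflict Q (Inr e) (Inr c)"
  proof
    assume "conflict Q (Inr e) (Inr c)"
    then obtain s c1 c2 where h: "(s, c1) \<in> arcs_be Q" "(s, c2) \<in> arcs_be Q" "c1 \<noteq> c2"
       "(Inr c1, Inr e) \<in> F\<^sup>*" "(Inr c2, Inr c) \<in> F\<^sup>*" unfolding conflict_def by blast
    have c2: "c2 \<in> C" using conf_closed[OF C c h(5)] .
    show False
    proof (cases "c1 = e")
      case True
      then have "s \<in> fut_conds Q C" using pre h(1) by (auto simp: preE_def)
      moreover have "s \<in> (\<Union>e\<in>C. preE Q e)" using c2 h(2) by (auto simp: preE_def)
      ultimately show False by (auto simp: fut_conds_def)
    next
      case False
      then obtain b where b: "(b,e) \<in> arcs_be Q" "(Inr c1, Inl b) \<in> F\<^sup>*" using rt_Inr_Inr'[OF h(4)] by blast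
      have "b \<in> fut_conds Q C" using pre b(1) by (auto simp: preE_def)
      moreover have "conflict Q (Inl b) (Inr c)" unfolding conflict_def using h(1-3) h(5) b(2)
        by (intro exI[of _ s] exI[of _ c1] exI[of _ c2]) simp
      ultimately show False using c by (auto simp: fut_conds_def)
    qed
  qed
qed

lemma post_fut: assumes C: "configuration Q C" and e: "e \<in> fut_events Q C" and eb: "(e,b) \<in> arcs_eb Q"
  shows "b \<in> fut_conds Q C"
  unfolding fut_conds_def
proof (intro CollectI conjI ballI)
  show "b \<in> conds Q" using eb eb_sub by blast
  have ee: "e \<in> events Q" "e \<notin> C" "\<forall>c\<in>C. \<not> conflict Q (Inr e) (Inr c)" using e by (auto simp: fut_events_def)
  show "b \<notin> (\<Union>e\<in>C. preE Q e)"
  proof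
    assume "b \<in> (\<Union>e\<in>C. preE Q e)"
    then obtain c where c: "c \<in> C" "(b,c) \<in> arcs_be Q" by (auto simp: preE_def)
    then have "causal Q (Inr e) (Inr c)" using two_step eb by simp
    then have "e \<in> C" using C c(1) ee(1) by (simp add: configuration_def)
    then show False using ee by blast
  qed
  fix c assume c: "c \<in> C"
  show "\<not> conflict Q (Inl b) (Inr c)"
  proof
    assume "conflict Q (Inl b) (Inr c)"
    then obtain s c1 c2 where h: "(s, c1) \<in> arcs_be Q" "(s, c2) \<in> arcs_be Q" "c1 \<noteq> c2"
       "(Inr c1, Inl b) \<in> F\<^sup>*" "(Inr c2, Inr c) \<in> F\<^sup>*" unfolding conflict_def by blast
    obtain d where d: "(d,b) \<in> arcs_eb Q" "(Inr c1, Inr d) \<in> F\<^sup>*" using rt_Inr_Inl[OF h(4)] by blast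
    have "d = e" using in_uniq d(1) eb by blast
    then have "conflict Q (Inr e) (Inr c)" unfolding conflict_def using h(1-3) h(5) d(2)
      by (intro exI[of _ s] exI[of _ c1] exI[of _ c2]) simp
    then show False using ee c by blast
  qed
qed

inductive rel :: "'e set \<Rightarrow> 'e set \<Rightarrow> 'b + 'e \<Rightarrow> 'b + 'e \<Rightarrow> bool" for C1 C2 where
  rcut: "b \<in> cut Q C1 \<Longrightarrow> b' \<in> cut Q C2 \<Longrightarrow> hC b = hC b' \<Longrightarrow> rel C1 C2 (Inl b) (Inl b')"
| rev: "e \<in> events Q \<Longrightarrow> e' \<in> events Q \<Longrightarrow> hE e = hE e' \<Longrightarrow>
        \<forall>b\<in>preE Q e. \<exists>b'\<in>preE Q e'. rel C1 C2 (Inl b) (Inl b') \<Longrightarrow>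
        \<forall>b'\<in>preE Q e'. \<exists>b\<in>preE Q e. rel C1 C2 (Inl b) (Inl b') \<Longrightarrow> rel C1 C2 (Inr e) (Inr e')"
| rpost: "rel C1 C2 (Inr e) (Inr e') \<Longrightarrow> (e,b) \<in> arcs_eb Q \<Longrightarrow> (e',b') \<in> arcs_eb Q \<Longrightarrow>
        hC b = hC b' \<Longrightarrow> rel C1 C2 (Inl b) (Inl b')"

lemma rel_sym: "rel C1 C2 x y \<Longrightarrow> rel C2 C1 y x"
proof (induct rule: rel.induct)
  case (rcut b b') then show ?case by (intro rel.rcut) auto
next
  case (rev e e')
  show ?case
  proof (rule rel.rev)
    show "\<forall>b\<in>preE Q e'. \<exists>b'\<in>preE Q e. rel C2 C1 (Inl b) (Inl b')" using rev(5) by fast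
    show "\<forall>b'\<in>preE Q e. \<exists>b\<in>preE Q e'. rel C2 C1 (Inl b) (Inl b')" using rev(4) by fast
  qed (use rev in auto)
next
  case (rpost e e' b b') then show ?case by (intro rel.rpost[of _ _ e' e]) auto
qed

lemma rel_ev_inv: "rel C1 C2 (Inr e) y \<Longrightarrow> \<exists>e'. y = Inr e' \<and> e \<in> events Q \<and> e' \<in> events Q \<and> hE e = hE e'
   \<and> (\<forall>b\<in>preE Q e. \<exists>b'\<in>preE Q e'. rel C1 C2 (Inl b) (Inl b'))
   \<and> (\<forall>b'\<in>preE Q e'. \<exists>b\<in>preE Q e. rel C1 C2 (Inl b) (Inl b'))"
  by (cases rule: rel.cases) auto

lemma rel_B_inv: "rel C1 C2 (Inl b) y \<Longrightarrow> \<exists>b'. y = Inl b' \<and> hC b = hC b' \<and>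
   ((b \<in> cut Q C1 \<and> b' \<in> cut Q C2) \<or> (\<exists>e e'. rel C1 C2 (Inr e) (Inr e') \<and> (e,b) \<in> arcs_eb Q \<and> (e',b') \<in> arcs_eb Q))"
  by (cases rule: rel.cases) auto

lemma rel_lab_B: "rel C1 C2 (Inl b) (Inl b') \<Longrightarrow> hC b = hC b'"
  using rel_B_inv by fastforce

definition futn :: "'e set \<Rightarrow> 'b + 'e \<Rightarrow> bool" where
  "futn C x = (case x of Inl b \<Rightarrow> b \<in> fut_conds Q C | Inr e \<Rightarrow> e \<in> fut_events Q C)"

lemma rel_fut: assumes C1: "configuration Q C1" and C2: "configuration Q C2"
  shows "rel C1 C2 x y \<Longrightarrow> futn C1 x \<and> futn C2 y"
proof (induct rule: rel.induct)
  case (rcut b b') then show ?case using cut_fut C1 C2 by (simp add: futn_def)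
next
  case (rev e e')
  have "preE Q e \<subseteq> fut_conds Q C1" using rev(4) by (auto simp: futn_def)
  moreover have "preE Q e' \<subseteq> fut_conds Q C2" using rev(5) by (auto simp: futn_def)
  ultimately show ?case using pre_fut[OF C1 rev(1)] pre_fut[OF C2 rev(2)] by (simp add: futn_def)
next
  case (rpost e e' b b')
  then have "e \<in> fut_events Q C1" "e' \<in> fut_events Q C2" by (simp_all add: futn_def)
  then show ?case using post_fut[OF C1 _ rpost(3)] post_fut[OF C2 _ rpost(4)] by (simp add: futn_def)
qed

lemma rel_fun:
  assumes C1: "configuration Q C1" and C2: "configuration Q C2" and inj2: "inj_on hC (cut Q C2)"
  shows "rel C1 C2 x y \<Longrightarrow> rel C1 C2 x z \<Longrightarrow> y = z"
proof (induct arbitrary: z rule: rel.induct)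
  case (rcut b b')
  obtain b'' where b'': "z = Inl b''" "hC b = hC b''"
    "(b \<in> cut Q C1 \<and> b'' \<in> cut Q C2) \<or> (\<exists>e e'. rel C1 C2 (Inr e) (Inr e') \<and> (e,b) \<in> arcs_eb Q \<and> (e',b'') \<in> arcs_eb Q)"
    using rel_B_inv[OF rcut(4)] by blast
  show ?case using b''(3)
  proof
    assume "b \<in> cut Q C1 \<and> b'' \<in> cut Q C2"
    then show ?thesis using inj2 rcut b'' by (auto simp: inj_on_def)
  next
    assume "\<exists>e e'. rel C1 C2 (Inr e) (Inr e') \<and> (e,b) \<in> arcs_eb Q \<and> (e',b'') \<in> arcs_eb Q"
    then obtain e e' where h: "rel C1 C2 (Inr e) (Inr e')" "(e,b) \<in> arcs_eb Q" by blast
    have "e \<in> fut_events Q C1" using rel_fut[OF C1 C2 h(1)] by (simp add: futn_def)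
    moreover have "e \<in> C1" using cut_cond_in rcut(1) h(2) by blast
    ultimately show ?thesis by (simp add: fut_events_def)
  qed
next
  case (rev e e')
  obtain e'' where e'': "z = Inr e''" "e'' \<in> events Q" "hE e = hE e''"
    "\<forall>b\<in>preE Q e. \<exists>b'\<in>preE Q e''. rel C1 C2 (Inl b) (Inl b')"
    "\<forall>b'\<in>preE Q e''. \<exists>b\<in>preE Q e. rel C1 C2 (Inl b) (Inl b')"
    using rel_ev_inv[OF rev(6)] by blast
  have "preE Q e' = preE Q e''"
  proof
    show "preE Q e' \<subseteq> preE Q e''"
    proof
      fix b' assume "b' \<in> preE Q e'"
      then obtain b where b: "b \<in> preE Q e" "rel C1 C2 (Inl b) (Inl b')" "\<forall>z. rel C1 C2 (Inl b) z \<longrightarrow> Inl b' = z"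
        using rev(5) by blast
      obtain b'' where "b'' \<in> preE Q e''" "rel C1 C2 (Inl b) (Inl b'')" using e''(4) b(1) by blast
      then show "b' \<in> preE Q e''" using b(3) by auto
    qed
    show "preE Q e'' \<subseteq> preE Q e'"
    proof
      fix b'' assume "b'' \<in> preE Q e''"
      then obtain b where b: "b \<in> preE Q e" "rel C1 C2 (Inl b) (Inl b'')" using e''(5) by blast
      obtain b' where "b' \<in> preE Q e'" "\<forall>z. rel C1 C2 (Inl b) z \<longrightarrow> Inl b' = z" using rev(4) b(1) by blast
      then show "b'' \<in> preE Q e'" using b(2) by auto
    qed
  qed
  then have "e' = e''" using uniq_ev rev(2) e''(2) rev(3) e''(3) by simp
  then show ?case using e''(1) by simp
next
  case (rpost e e' b b')
  obtain b'' where b'': "z = Inl b''" "hC b = hC b''"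
    "(b \<in> cut Q C1 \<and> b'' \<in> cut Q C2) \<or> (\<exists>e e'. rel C1 C2 (Inr e) (Inr e') \<and> (e,b) \<in> arcs_eb Q \<and> (e',b'') \<in> arcs_eb Q)"
    using rel_B_inv[OF rpost(6)] by blast
  have ef: "e \<in> fut_events Q C1" using rel_fut[OF C1 C2 rpost(1)] by (simp add: futn_def)
  have e'ev: "e' \<in> events Q" using rel_ev_inv[OF rpost(1)] by blast
  show ?case using b''(3)
  proof
    assume "b \<in> cut Q C1 \<and> b'' \<in> cut Q C2"
    then have "e \<in> C1" using cut_cond_in rpost(3) by blast
    then show ?thesis using ef by (simp add: fut_events_def)
  next
    assume "\<exists>e e'. rel C1 C2 (Inr e) (Inr e') \<and> (e,b) \<in> arcs_eb Q \<and> (e',b'') \<in> arcs_eb Q"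
    then obtain e0 e0' where h: "rel C1 C2 (Inr e0) (Inr e0')" "(e0,b) \<in> arcs_eb Q" "(e0',b'') \<in> arcs_eb Q" by blast
    have "e0 = e" using in_uniq h(2) rpost(3) by blast
    then have "e0' = e'" using rpost(2) h(1) by fastforce
    then have "b' \<in> postE Q e'" "b'' \<in> postE Q e'" using h(3) rpost(4) by (auto simp: postE_def)
    moreover have "hC b' = hC b''" using rpost(5) b''(2) by simp
    ultimately have "b' = b''" using bij_post[OF e'ev] by (auto simp: bij_betw_def inj_on_def)
    then show ?thesis using b''(1) by simp
  qed
qed

lemma rel_inj:
  assumes C1: "configuration Q C1" and C2: "configuration Q C2" and inj1: "inj_on hC (cut Q C1)"
  shows "rel C1 C2 x z \<Longrightarrow> rel C1 C2 y z \<Longrightarrow> x = y"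
  using rel_fun[OF C2 C1 inj1] rel_sym by blast

lemma fconf_D: "fconf Q D \<Longrightarrow> configuration Q D" "fconf Q D \<Longrightarrow> finite D" by (simp_all add: fconf_def)

lemma inv:
  assumes C1: "fconf Q C1" and C2: "fconf Q C2" and mk: "mark Q hC C1 = mark Q hC C2"
  shows "fconf Q D1 \<Longrightarrow> C1 \<subseteq> D1 \<Longrightarrow> \<exists>D2. fconf Q D2 \<and> C2 \<subseteq> D2
     \<and> (\<forall>x\<in>D1 - C1. \<exists>x'\<in>D2 - C2. rel C1 C2 (Inr x) (Inr x'))
     \<and> (\<forall>x'\<in>D2 - C2. \<exists>x\<in>D1 - C1. rel C1 C2 (Inr x) (Inr x'))
     \<and> (\<forall>b\<in>cut Q D1. \<exists>b'\<in>cut Q D2. rel C1 C2 (Inl b) (Inl b'))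
     \<and> (\<forall>b'\<in>cut Q D2. \<exists>b\<in>cut Q D1. rel C1 C2 (Inl b) (Inl b'))"
proof (induct "card (D1 - C1)" arbitrary: D1 rule: less_induct)
  case less
  have D1: "configuration Q D1" "finite D1" using less.prems fconf_D by auto
  have cC1: "configuration Q C1" and cC2: "configuration Q C2" using C1 C2 fconf_D by auto
  have inj1: "inj_on hC (cut Q C1)" using inj_cut[OF C1] .
  show ?case
  proof (cases "D1 - C1 = {}")
    case True
    then have D1eq: "D1 = C1" using less.prems(2) by blast
    show ?thesis
    proof (intro exI[of _ C2] conjI ballI)
      fix b assume b: "b \<in> cut Q D1"
      then have bc: "b \<in> cut Q C1" using D1eq by simp
      have "1 \<le> mark Q hC C1 (hC b)" by (rule mark_pos[OF C1 bc])
      then have "1 \<le> mark Q hC C2 (hC b)" using mk by simp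
      then obtain b' where b': "b' \<in> cut Q C2" "hC b' = hC b" using mark_pos_ex by blast
      have "rel C1 C2 (Inl b) (Inl b')" using rel.rcut[OF bc b'(1)] b'(2) by simp
      then show "\<exists>b'\<in>cut Q C2. rel C1 C2 (Inl b) (Inl b')" using b'(1) by blast
    next
      fix b' assume b': "b' \<in> cut Q C2"
      have "1 \<le> mark Q hC C2 (hC b')" by (rule mark_pos[OF C2 b'])
      then have "1 \<le> mark Q hC C1 (hC b')" using mk by simp
      then obtain b where b: "b \<in> cut Q C1" "hC b = hC b'" using mark_pos_ex by blast
      have "rel C1 C2 (Inl b) (Inl b')" using rel.rcut[OF b(1) b'] b(2) by simp
      then show "\<exists>b\<in>cut Q D1. rel C1 C2 (Inl b) (Inl b')" using b(1) D1eq by blast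
    qed (use C2 True in auto)
  next
    case False
    have sub: "D1 - C1 \<subseteq> events Q" using conf_ev[OF D1(1)] by blast
    obtain x where x: "x \<in> D1 - C1" "\<forall>y\<in>D1 - C1. \<not> causal Q (Inr x) (Inr y)"
      using max_ex[OF _ False sub] D1(2) by blast
    have xe: "x \<in> events Q" using sub x(1) by blast
    have mx: "\<forall>y\<in>D1. \<not> causal Q (Inr x) (Inr y)"
    proof
      fix y assume y: "y \<in> D1"
      show "\<not> causal Q (Inr x) (Inr y)"
      proof
        assume c: "causal Q (Inr x) (Inr y)"
        show False
        proof (cases "y \<in> C1")
          case True
          then have "x \<in> C1" using cC1 c xe by (simp add: configuration_def)
          then show False using x(1) by blast
        next
          case False then show False using x(2) y c by blast
        qed
      qed
    qed
    have xD1: "x \<in> D1" using x(1) by blast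
    note r = max_remove[OF D1(1) xD1 mx]
    define D1' where "D1' = D1 - {x}"
    have D1': "fconf Q D1'" using r D1(2) by (simp add: fconf_def D1'_def)
    have C1D1': "C1 \<subseteq> D1'" using less.prems(2) x(1) by (auto simp: D1'_def)
    have "D1' - C1 = (D1 - C1) - {x}" by (auto simp: D1'_def)
    moreover have "card ((D1 - C1) - {x}) < card (D1 - C1)" using x(1) D1(2) by (meson card_Diff1_less finite_Diff)
    ultimately have cl: "card (D1' - C1) < card (D1 - C1)" by simp
    from less.hyps[OF cl D1' C1D1'] obtain D2' where IH: "fconf Q D2'" "C2 \<subseteq> D2'"
      "\<forall>x\<in>D1' - C1. \<exists>x'\<in>D2' - C2. rel C1 C2 (Inr x) (Inr x')"
      "\<forall>x'\<in>D2' - C2. \<exists>x\<in>D1' - C1. rel C1 C2 (Inr x) (Inr x')"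
      "\<forall>b\<in>cut Q D1'. \<exists>b'\<in>cut Q D2'. rel C1 C2 (Inl b) (Inl b')"
      "\<forall>b'\<in>cut Q D2'. \<exists>b\<in>cut Q D1'. rel C1 C2 (Inl b) (Inl b')"
      by blast
    have preD1': "preE Q x \<subseteq> cut Q D1'" using r(2) by (simp add: D1'_def)
    have cD2': "configuration Q D2'" "finite D2'" using IH(1) fconf_D by auto
    define X where "X = {b' \<in> cut Q D2'. \<exists>b\<in>preE Q x. rel C1 C2 (Inl b) (Inl b')}"
    have co: "co_set Q X" using co_set_sub[OF cut_co[OF cD2'(1)]] by (auto simp: X_def)
    have inj: "inj_on hC X" using inj_cut[OF IH(1)] by (rule inj_on_subset) (auto simp: X_def)
    have img: "hC ` X = preT N (hE x)"
    proof
      show "hC ` X \<subseteq> preT N (hE x)"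
      proof
        fix p assume "p \<in> hC ` X"
        then obtain b' b where bb: "b \<in> preE Q x" "rel C1 C2 (Inl b) (Inl b')" "p = hC b'" by (auto simp: X_def)
        have "hC ` preE Q x = preT N (hE x)" using bij_pre[OF xe] by (simp add: bij_betw_def)
        moreover have "p = hC b" using bb(3) rel_lab_B[OF bb(2)] by simp
        ultimately show "p \<in> preT N (hE x)" using bb(1) by blast
      qed
      show "preT N (hE x) \<subseteq> hC ` X"
      proof
        fix p assume "p \<in> preT N (hE x)"
        moreover have "hC ` preE Q x = preT N (hE x)" using bij_pre[OF xe] by (simp add: bij_betw_def)
        ultimately have "p \<in> hC ` preE Q x" by simp
        then obtain b where b: "b \<in> preE Q x" "hC b = p" by (metis imageE)
        then obtain b' where b': "b' \<in> cut Q D2'" "rel C1 C2 (Inl b) (Inl b')" using IH(5) preD1' by blast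
        then have "b' \<in> X" using b(1) by (auto simp: X_def)
        moreover have "hC b' = p" using b(2) rel_lab_B[OF b'(2)] by simp
        ultimately show "p \<in> hC ` X" by blast
      qed
    qed
    have "bij_betw hC X (preT N (hE x))" using inj img by (simp add: bij_betw_def)
    then obtain x' where x': "x' \<in> events Q" "preE Q x' = X" "hE x' = hE x"
      using sat[OF hE_tr[OF xe] co] by blast
    have rx: "rel C1 C2 (Inr x) (Inr x')"
    proof (rule rel.rev)
      show "\<forall>b\<in>preE Q x. \<exists>b'\<in>preE Q x'. rel C1 C2 (Inl b) (Inl b')"
      proof
        fix b assume b: "b \<in> preE Q x"
        then obtain b' where b': "b' \<in> cut Q D2'" "rel C1 C2 (Inl b) (Inl b')" using IH(5) preD1' by blast
        then show "\<exists>b'\<in>preE Q x'. rel C1 C2 (Inl b) (Inl b')" using b x'(2) by (auto simp: X_def)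
      qed
      show "\<forall>b'\<in>preE Q x'. \<exists>b\<in>preE Q x. rel C1 C2 (Inl b) (Inl b')" using x'(2) by (auto simp: X_def)
    qed (use xe x' in auto)
    have preD2': "preE Q x' \<subseteq> cut Q D2'" using x'(2) by (auto simp: X_def)
    note e2 = ext[OF cD2'(1) x'(1) preD2']
    have insx: "insert x D1' = D1" using xD1 by (auto simp: D1'_def)
    note e1 = ext[OF fconf_D(1)[OF D1'] xe preD1']
    have cutD1: "cut Q D1 = (cut Q D1' - preE Q x) \<union> postE Q x" using e1(4) insx by simp
    have x'C2: "x' \<notin> C2" using e2(1) IH(2) by blast
    have injr: "\<And>u v w. rel C1 C2 u w \<Longrightarrow> rel C1 C2 v w \<Longrightarrow> u = v" using rel_inj[OF cC1 cC2 inj1] by blast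
    have postT: "postT N (hE x) = hC ` postE Q x" "postT N (hE x') = hC ` postE Q x'"
      using bij_post[OF xe] bij_post[OF x'(1)] by (simp_all add: bij_betw_def)
    show ?thesis
    proof (intro exI[of _ "insert x' D2'"] conjI ballI)
      show "fconf Q (insert x' D2')" using e2(3) cD2'(2) by (simp add: fconf_def)
      show "C2 \<subseteq> insert x' D2'" using IH(2) by blast
    next
      fix y assume y: "y \<in> D1 - C1"
      show "\<exists>y'\<in>insert x' D2' - C2. rel C1 C2 (Inr y) (Inr y')"
      proof (cases "y = x")
        case True then show ?thesis using rx x'C2 by blast
      next
        case False then have "y \<in> D1' - C1" using y by (auto simp: D1'_def)
        then show ?thesis using IH(3) by blast
      qed
    next
      fix y' assume y': "y' \<in> insert x' D2' - C2"
      show "\<exists>y\<in>D1 - C1. rel C1 C2 (Inr y) (Inr y')"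
      proof (cases "y' = x'")
        case True then show ?thesis using rx x(1) by blast
      next
        case False then have "y' \<in> D2' - C2" using y' by blast
        then show ?thesis using IH(4) by (auto simp: D1'_def)
      qed
    next
      fix b assume b: "b \<in> cut Q D1"
      show "\<exists>b'\<in>cut Q (insert x' D2'). rel C1 C2 (Inl b) (Inl b')"
      proof (cases "b \<in> postE Q x")
        case True
        then have "hC b \<in> postT N (hE x')" using postT x'(3) by auto
        then obtain b' where b': "b' \<in> postE Q x'" "hC b' = hC b" using postT(2) by auto
        have "rel C1 C2 (Inl b) (Inl b')"
          using rel.rpost[OF rx, of b b'] True b' by (simp add: postE_def)
        then show ?thesis using b'(1) e2(4) by auto
      next
        case False
        then have bb: "b \<in> cut Q D1'" "b \<notin> preE Q x" using b cutD1 by auto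
        then obtain b' where b': "b' \<in> cut Q D2'" "rel C1 C2 (Inl b) (Inl b')" using IH(5) by blast
        have "b' \<notin> X"
        proof
          assume "b' \<in> X"
          then obtain b0 where "b0 \<in> preE Q x" "rel C1 C2 (Inl b0) (Inl b')" by (auto simp: X_def)
          then have "Inl b0 = Inl b" using injr[OF _ b'(2)] by blast
          then show False using bb(2) \<open>b0 \<in> preE Q x\<close> by simp
        qed
        then show ?thesis using b' e2(4) x'(2) by auto
      qed
    next
      fix b' assume b': "b' \<in> cut Q (insert x' D2')"
      show "\<exists>b\<in>cut Q D1. rel C1 C2 (Inl b) (Inl b')"
      proof (cases "b' \<in> postE Q x'")
        case True
        then have "hC b' \<in> postT N (hE x)" using postT x'(3) by auto
        then obtain b where b: "b \<in> postE Q x" "hC b = hC b'" using postT(1) by auto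
        have "rel C1 C2 (Inl b) (Inl b')"
          using rel.rpost[OF rx, of b b'] True b by (simp add: postE_def)
        then show ?thesis using b(1) cutD1 by auto
      next
        case False
        then have bb: "b' \<in> cut Q D2'" "b' \<notin> X" using b' e2(4) x'(2) by auto
        then obtain b where b: "b \<in> cut Q D1'" "rel C1 C2 (Inl b) (Inl b')" using IH(6) by blast
        have "b \<notin> preE Q x" using b bb by (auto simp: X_def)
        then show ?thesis using b cutD1 by auto
      qed
    qed
  qed
qed

lemma loc_rt: "x \<in> local_config Q e \<Longrightarrow> (Inr x, Inr e) \<in> F\<^sup>*"
  by (auto simp: local_config_def causal_def)

lemma loc_in: "e \<in> events Q \<Longrightarrow> e \<in> local_config Q e" by (simp add: local_config_def)

lemma loc_conf: assumes e: "e \<in> events Q" shows "fconf Q (local_config Q e)"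
  unfolding fconf_def
proof
  show "configuration Q (local_config Q e)" unfolding configuration_def
  proof (intro conjI ballI impI)
    show "local_config Q e \<subseteq> events Q" by (auto simp: local_config_def)
  next
    fix x e' assume x: "x \<in> local_config Q e" and e': "e' \<in> events Q" "causal Q (Inr e') (Inr x)"
    have "(Inr x, Inr e) \<in> F\<^sup>*" using loc_rt[OF x] .
    then have "(Inr e', Inr e) \<in> F\<^sup>+" using e'(2) unfolding causal_def by (meson trancl_rtrancl_trancl)
    then show "e' \<in> local_config Q e" using e'(1) by (simp add: local_config_def causal_def)
  next
    fix x y assume x: "x \<in> local_config Q e" and y: "y \<in> local_config Q e"
    show "\<not> conflict Q (Inr x) (Inr y)"
    proof
      assume "conflict Q (Inr x) (Inr y)"
      then have "conflict Q (Inr e) (Inr y)" by (rule cf_fwd1[OF _ loc_rt[OF x]])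
      then have "conflict Q (Inr e) (Inr e)" by (rule cf_fwd[OF _ loc_rt[OF y]])
      then show False using nsc by blast
    qed
  qed
  have "finite {y. causal Q y (Inr e)}" using finpast nodes_Inr e by blast
  then have "finite (Inr -` {y. causal Q y (Inr e)} :: 'e set)" by (rule finite_vimageI) simp
  moreover have "local_config Q e \<subseteq> insert e (Inr -` {y. causal Q y (Inr e)})" by (auto simp: local_config_def)
  ultimately show "finite (local_config Q e)" using finite_subset by blast
qed

lemma conf_union: assumes C: "configuration Q C" and e: "e \<in> fut_events Q C"
  shows "configuration Q (C \<union> local_config Q e)"
proof -
  have ee: "e \<in> events Q" using e by (simp add: fut_events_def)
  have L: "configuration Q (local_config Q e)" using loc_conf[OF ee] by (simp add: fconf_def)
  have cf: "\<not> conflict Q (Inr x) (Inr y)" if x: "x \<in> local_config Q e" and y: "y \<in> C" for x y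
  proof
    assume "conflict Q (Inr x) (Inr y)"
    then have "conflict Q (Inr e) (Inr y)" by (rule cf_fwd1[OF _ loc_rt[OF x]])
    then show False using e y by (simp add: fut_events_def)
  qed
  show ?thesis unfolding configuration_def
  proof (intro conjI ballI impI)
    show "C \<union> local_config Q e \<subseteq> events Q" using conf_ev[OF C] conf_ev[OF L] by blast
  next
    fix x e' assume x: "x \<in> C \<union> local_config Q e" and e': "e' \<in> events Q" "causal Q (Inr e') (Inr x)"
    then show "e' \<in> C \<union> local_config Q e" using C L by (auto simp: configuration_def)
  next
    fix x y assume x: "x \<in> C \<union> local_config Q e" and y: "y \<in> C \<union> local_config Q e"
    show "\<not> conflict Q (Inr x) (Inr y)"
    proof (cases "x \<in> C")
      case True
      show ?thesis
      proof (cases "y \<in> C")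
        case True then show ?thesis using conf_cf[OF C \<open>x \<in> C\<close>] by blast
      next
        case False then have "y \<in> local_config Q e" using y by blast
        then show ?thesis using cf[OF _ \<open>x \<in> C\<close>] cf_sym by blast
      qed
    next
      case False
      then have xl: "x \<in> local_config Q e" using x by blast
      show ?thesis
      proof (cases "y \<in> C")
        case True then show ?thesis using cf[OF xl] by blast
      next
        case False then have "y \<in> local_config Q e" using y by blast
        then show ?thesis using conf_cf[OF L xl] by blast
      qed
    qed
  qed
qed

lemma tot_E:
  assumes C1: "fconf Q C1" and C2: "fconf Q C2" and mk: "mark Q hC C1 = mark Q hC C2"
    and e: "e \<in> fut_events Q C1"
  shows "\<exists>e'. rel C1 C2 (Inr e) (Inr e')"
proof -
  have ee: "e \<in> events Q" "e \<notin> C1" using e by (auto simp: fut_events_def)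
  define D1 where "D1 = C1 \<union> local_config Q e"
  have "fconf Q D1" using conf_union[OF fconf_D(1)[OF C1] e] loc_conf[OF ee(1)] fconf_D(2)[OF C1]
    by (simp add: fconf_def D1_def)
  moreover have "C1 \<subseteq> D1" by (simp add: D1_def)
  ultimately obtain D2 where "\<forall>x\<in>D1 - C1. \<exists>x'\<in>D2 - C2. rel C1 C2 (Inr x) (Inr x')"
    using inv[OF C1 C2 mk] by blast
  moreover have "e \<in> D1 - C1" using ee loc_in by (simp add: D1_def)
  ultimately show ?thesis by blast
qed

lemma tot_B:
  assumes C1: "fconf Q C1" and C2: "fconf Q C2" and mk: "mark Q hC C1 = mark Q hC C2"
    and b: "b \<in> fut_conds Q C1"
  shows "\<exists>b'. rel C1 C2 (Inl b) (Inl b')"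
proof (cases "b \<in> cut Q C1")
  case True
  have "1 \<le> mark Q hC C1 (hC b)" by (rule mark_pos[OF C1 True])
  then have "1 \<le> mark Q hC C2 (hC b)" using mk by simp
  then obtain b' where b': "b' \<in> cut Q C2" "hC b' = hC b" using mark_pos_ex by blast
  have "rel C1 C2 (Inl b) (Inl b')" using rel.rcut[OF True b'(1)] b'(2) by simp
  then show ?thesis by blast
next
  case False
  have bb: "b \<in> conds Q" "b \<notin> (\<Union>e\<in>C1. preE Q e)" "\<forall>c\<in>C1. \<not> conflict Q (Inl b) (Inr c)"
    using b by (auto simp: fut_conds_def)
  have "preC Q b \<noteq> {}"
  proof
    assume "preC Q b = {}"
    then have "b \<in> minC Q" using bb(1) by (simp add: minC_def)
    then have "b \<in> cut Q C1" using bb(2) by (simp add: cut_def)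
    then show False using False by blast
  qed
  then obtain e where eb: "(e,b) \<in> arcs_eb Q" by (auto simp: preC_def)
  have ee: "e \<in> events Q" using eb eb_sub by blast
  have "e \<notin> C1"
  proof
    assume "e \<in> C1"
    then have "b \<in> (\<Union>e\<in>C1. postE Q e)" using eb by (auto simp: postE_def)
    then have "b \<in> cut Q C1" using bb(2) by (simp add: cut_def)
    then show False using False by blast
  qed
  moreover have "\<forall>c\<in>C1. \<not> conflict Q (Inr e) (Inr c)"
  proof (intro ballI notI)
    fix c assume c: "c \<in> C1" and "conflict Q (Inr e) (Inr c)"
    then have "conflict Q (Inl b) (Inr c)" using cf_fwd1 eb by (meson F_simps(2) r_into_rtrancl)
    then show False using bb(3) c by blast
  qed
  ultimately have ef: "e \<in> fut_events Q C1" using ee by (simp add: fut_events_def)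
  obtain e' where r: "rel C1 C2 (Inr e) (Inr e')" using tot_E[OF C1 C2 mk ef] by blast
  then have e': "e' \<in> events Q" "hE e = hE e'" using rel_ev_inv by blast+
  have "hC b \<in> postT N (hE e)" using bij_post[OF ee] eb by (auto simp: bij_betw_def postE_def)
  then have "hC b \<in> hC ` postE Q e'" using bij_post[OF e'(1)] e'(2) by (simp add: bij_betw_def)
  then obtain b' where b': "b' \<in> postE Q e'" "hC b' = hC b" by (metis imageE)
  have "rel C1 C2 (Inl b) (Inl b')" using rel.rpost[OF r eb, of b'] b' by (simp add: postE_def)
  then show ?thesis by blast
qed

lemma eb_fwd:
  assumes C1: "configuration Q C1" and C2: "configuration Q C2" and inj2: "inj_on hC (cut Q C2)"
    and rb: "rel C1 C2 (Inl b) (Inl b')" and re: "rel C1 C2 (Inr e) (Inr e')" and eb: "(e,b) \<in> arcs_eb Q"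
  shows "(e',b') \<in> arcs_eb Q"
proof -
  obtain b'' where b'': "Inl b' = Inl b''" "hC b = hC b''"
    "(b \<in> cut Q C1 \<and> b'' \<in> cut Q C2) \<or> (\<exists>e e'. rel C1 C2 (Inr e) (Inr e') \<and> (e,b) \<in> arcs_eb Q \<and> (e',b'') \<in> arcs_eb Q)"
    using rel_B_inv[OF rb] by blast
  show ?thesis using b''(3)
  proof
    assume "b \<in> cut Q C1 \<and> b'' \<in> cut Q C2"
    then have "e \<in> C1" using cut_cond_in eb by blast
    moreover have "e \<in> fut_events Q C1" using rel_fut[OF C1 C2 re] by (simp add: futn_def)
    ultimately show ?thesis by (simp add: fut_events_def)
  next
    assume "\<exists>e e'. rel C1 C2 (Inr e) (Inr e') \<and> (e,b) \<in> arcs_eb Q \<and> (e',b'') \<in> arcs_eb Q"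
    then obtain e0 e0' where h: "rel C1 C2 (Inr e0) (Inr e0')" "(e0,b) \<in> arcs_eb Q" "(e0',b'') \<in> arcs_eb Q" by blast
    have "e0 = e" using in_uniq h(2) eb by blast
    then have "Inr e' = Inr e0'" using rel_fun[OF C1 C2 inj2 re] h(1) by blast
    then show ?thesis using h(3) b''(1) by simp
  qed
qed

lemma iso_ex:
  assumes C1: "fconf Q C1" and C2: "fconf Q C2" and mk: "mark Q hC C1 = mark Q hC C2"
  shows "\<exists>fB fE. fut_iso Q hC hE C1 C2 fB fE \<and> (\<forall>e\<in>fut_events Q C1. rel C1 C2 (Inr e) (Inr (fE e)))"
proof -
  define fE where "fE e = (SOME e'. rel C1 C2 (Inr e) (Inr e'))" for e
  define fB where "fB b = (SOME b'. rel C1 C2 (Inl b) (Inl b'))" for b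
  have rE: "rel C1 C2 (Inr e) (Inr (fE e))" if "e \<in> fut_events Q C1" for e
    unfolding fE_def using tot_E[OF C1 C2 mk that] by (rule someI_ex)
  have rB: "rel C1 C2 (Inl b) (Inl (fB b))" if "b \<in> fut_conds Q C1" for b
    unfolding fB_def using tot_B[OF C1 C2 mk that] by (rule someI_ex)
  have cC1: "configuration Q C1" and cC2: "configuration Q C2" using C1 C2 fconf_D by auto
  have inj1: "inj_on hC (cut Q C1)" and inj2: "inj_on hC (cut Q C2)" using inj_cut C1 C2 by auto
  have mk': "mark Q hC C2 = mark Q hC C1" using mk by simp
  note rfun = rel_fun[OF cC1 cC2 inj2] and injr = rel_inj[OF cC1 cC2 inj1]
  have "bij_betw fB (fut_conds Q C1) (fut_conds Q C2)" unfolding bij_betw_def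
  proof (intro conjI)
    show "inj_on fB (fut_conds Q C1)"
    proof (rule inj_onI)
      fix x y assume xy: "x \<in> fut_conds Q C1" "y \<in> fut_conds Q C1" "fB x = fB y"
      have "rel C1 C2 (Inl x) (Inl (fB x))" "rel C1 C2 (Inl y) (Inl (fB x))" using rB[OF xy(1)] rB[OF xy(2)] xy(3) by auto
      then show "x = y" using injr by blast
    qed
    show "fB ` fut_conds Q C1 = fut_conds Q C2"
    proof
      show "fB ` fut_conds Q C1 \<subseteq> fut_conds Q C2"
      proof
        fix y assume "y \<in> fB ` fut_conds Q C1"
        then obtain x where x: "x \<in> fut_conds Q C1" "y = fB x" by blast
        show "y \<in> fut_conds Q C2" using rel_fut[OF cC1 cC2 rB[OF x(1)]] x(2) by (simp add: futn_def)
      qed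
      show "fut_conds Q C2 \<subseteq> fB ` fut_conds Q C1"
      proof
        fix b' assume b': "b' \<in> fut_conds Q C2"
        obtain b where "rel C2 C1 (Inl b') (Inl b)" using tot_B[OF C2 C1 mk' b'] by blast
        then have r: "rel C1 C2 (Inl b) (Inl b')" by (rule rel_sym)
        then have bf: "b \<in> fut_conds Q C1" using rel_fut[OF cC1 cC2 r] by (simp add: futn_def)
        then have "Inl (fB b) = Inl b'" using rfun[OF rB[OF bf] r] by simp
        then show "b' \<in> fB ` fut_conds Q C1" using bf by force
      qed
    qed
  qed
  moreover have "bij_betw fE (fut_events Q C1) (fut_events Q C2)" unfolding bij_betw_def
  proof (intro conjI)
    show "inj_on fE (fut_events Q C1)"
    proof (rule inj_onI)
      fix x y assume xy: "x \<in> fut_events Q C1" "y \<in> fut_events Q C1" "fE x = fE y"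
      have "rel C1 C2 (Inr x) (Inr (fE x))" "rel C1 C2 (Inr y) (Inr (fE x))" using rE[OF xy(1)] rE[OF xy(2)] xy(3) by auto
      then show "x = y" using injr by blast
    qed
    show "fE ` fut_events Q C1 = fut_events Q C2"
    proof
      show "fE ` fut_events Q C1 \<subseteq> fut_events Q C2"
      proof
        fix y assume "y \<in> fE ` fut_events Q C1"
        then obtain x where x: "x \<in> fut_events Q C1" "y = fE x" by blast
        show "y \<in> fut_events Q C2" using rel_fut[OF cC1 cC2 rE[OF x(1)]] x(2) by (simp add: futn_def)
      qed
      show "fut_events Q C2 \<subseteq> fE ` fut_events Q C1"
      proof
        fix b' assume b': "b' \<in> fut_events Q C2"
        obtain b where "rel C2 C1 (Inr b') (Inr b)" using tot_E[OF C2 C1 mk' b'] by blast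
        then have r: "rel C1 C2 (Inr b) (Inr b')" by (rule rel_sym)
        then have bf: "b \<in> fut_events Q C1" using rel_fut[OF cC1 cC2 r] by (simp add: futn_def)
        then have "Inr (fE b) = Inr b'" using rfun[OF rE[OF bf] r] by simp
        then show "b' \<in> fE ` fut_events Q C1" using bf by force
      qed
    qed
  qed
  moreover have "\<forall>b \<in> fut_conds Q C1. hC (fB b) = hC b" using rB rel_lab_B by metis
  moreover have "\<forall>e \<in> fut_events Q C1. hE (fE e) = hE e" using rE rel_ev_inv by fastforce
  moreover have "\<forall>b \<in> fut_conds Q C1. \<forall>e \<in> fut_events Q C1.
          ((b, e) \<in> arcs_be Q \<longleftrightarrow> (fB b, fE e) \<in> arcs_be Q)
        \<and> ((e, b) \<in> arcs_eb Q \<longleftrightarrow> (fE e, fB b) \<in> arcs_eb Q)"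
  proof (intro ballI conjI iffI)
    fix b e assume b: "b \<in> fut_conds Q C1" and e: "e \<in> fut_events Q C1"
    obtain e' where e': "Inr (fE e) = Inr e'"
      "\<forall>b\<in>preE Q e. \<exists>b'\<in>preE Q e'. rel C1 C2 (Inl b) (Inl b')"
      "\<forall>b'\<in>preE Q e'. \<exists>b\<in>preE Q e. rel C1 C2 (Inl b) (Inl b')"
      using rel_ev_inv[OF rE[OF e]] by blast
    have e'eq: "e' = fE e" using e'(1) by simp
    {
      assume "(b, e) \<in> arcs_be Q"
      then obtain b' where "b' \<in> preE Q e'" "rel C1 C2 (Inl b) (Inl b')" using e'(2) by (auto simp: preE_def)
      moreover have "Inl (fB b) = Inl b'" using rfun[OF rB[OF b]] calculation(2) by blast
      ultimately show "(fB b, fE e) \<in> arcs_be Q" using e'eq by (simp add: preE_def)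
    }
    {
      assume "(fB b, fE e) \<in> arcs_be Q"
      then obtain b0 where "b0 \<in> preE Q e" "rel C1 C2 (Inl b0) (Inl (fB b))" using e'(3) e'eq by (auto simp: preE_def)
      moreover have "b0 = b" using injr[OF calculation(2) rB[OF b]] by simp
      ultimately show "(b, e) \<in> arcs_be Q" by (simp add: preE_def)
    }
    {
      assume "(e, b) \<in> arcs_eb Q"
      then show "(fE e, fB b) \<in> arcs_eb Q" using eb_fwd[OF cC1 cC2 inj2 rB[OF b] rE[OF e]] by blast
    }
    {
      assume "(fE e, fB b) \<in> arcs_eb Q"
      then show "(e, b) \<in> arcs_eb Q" using eb_fwd[OF cC2 cC1 inj1 rel_sym[OF rB[OF b]] rel_sym[OF rE[OF e]]] by blast
    }
  qed
  ultimately show ?thesis unfolding fut_iso_def using rE by blast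
qed

lemma mark_eq_corr:
  assumes A: "fconf Q A" and B: "fconf Q B"
    and ab: "\<forall>b\<in>cut Q A. \<exists>b'\<in>cut Q B. hC b = hC b'" and ba: "\<forall>b'\<in>cut Q B. \<exists>b\<in>cut Q A. hC b = hC b'"
  shows "mark Q hC A = mark Q hC B"
proof
  fix p
  have iff: "1 \<le> mark Q hC A p \<longleftrightarrow> 1 \<le> mark Q hC B p"
  proof
    assume "1 \<le> mark Q hC A p"
    then obtain b where "b \<in> cut Q A" "hC b = p" using mark_pos_ex by blast
    then obtain b' where "b' \<in> cut Q B" "hC b' = p" using ab by force
    then show "1 \<le> mark Q hC B p" using mark_pos[OF B] by blast
  next
    assume "1 \<le> mark Q hC B p"
    then obtain b' where "b' \<in> cut Q B" "hC b' = p" using mark_pos_ex by blast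
    then obtain b where "b \<in> cut Q A" "hC b = p" using ba by force
    then show "1 \<le> mark Q hC A p" using mark_pos[OF A] by blast
  qed
  show "mark Q hC A p = mark Q hC B p" using iff mark_le1[OF A, of p] mark_le1[OF B, of p] by linarith
qed

lemma loc_sub: assumes C: "configuration Q C" and e: "e \<in> C" shows "local_config Q e \<subseteq> C"
  using C e by (auto simp: local_config_def configuration_def)

lemma complete:
  assumes M: "M \<in> reach N M0" and ad: "adequate_order Q hC hE R"
  shows "\<exists>C. fconf Q C \<and> mark Q hC C = M \<and> (\<forall>e\<in>C. \<not> cutoff Q hC R e)"
proof -
  define S where "S = {C. fconf Q C \<and> mark Q hC C = M}"
  obtain C0 where "fconf Q C0 \<and> mark Q hC C0 = M" using reach_conf[OF M] by blast
  then have "C0 \<in> S" by (simp add: S_def)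
  note ad' = ad[unfolded adequate_order_def]
  have wf: "wf {(C1, C2). R C1 C2}" using ad'[THEN conjunct2, THEN conjunct2, THEN conjunct2, THEN conjunct1] .
  obtain C where C: "C \<in> S" and min: "\<And>y. (y, C) \<in> {(C1,C2). R C1 C2} \<Longrightarrow> y \<notin> S"
    using wfE_min[OF wf \<open>C0 \<in> S\<close>] by blast
  have fC: "fconf Q C" and mC: "mark Q hC C = M" using C by (auto simp: S_def)
  have cC: "configuration Q C" using fconf_D(1)[OF fC] .
  have adq: "\<forall>C1 C2. R C1 C2 \<and> mark Q hC C1 = mark Q hC C2 \<longrightarrow>
          (\<forall>fB fE. fut_iso Q hC hE C1 C2 fB fE \<longrightarrow>
             (\<forall>X. finite X \<and> X \<subseteq> fut_events Q C1 \<and> configuration Q (C1 \<union> X)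
                  \<longrightarrow> R (C1 \<union> X) (C2 \<union> fE ` X)))"
    using ad'[THEN conjunct2, THEN conjunct2, THEN conjunct2, THEN conjunct2, THEN conjunct2] .
  show ?thesis
  proof (intro exI[of _ C] conjI ballI notI)
    show "fconf Q C" "mark Q hC C = M" using fC mC by auto
    fix e assume e: "e \<in> C" and co: "cutoff Q hC R e"
    have cdef: "e \<in> events Q \<and> (\<exists>e' \<in> events Q. mark Q hC (local_config Q e') = mark Q hC (local_config Q e)
                     \<and> R (local_config Q e') (local_config Q e))" using co by (simp only: cutoff_def)
    then have ee: "e \<in> events Q" by (rule conjunct1)
    from cdef obtain e' where e': "e' \<in> events Q" "mark Q hC (local_config Q e') = mark Q hC (local_config Q e)"
      "R (local_config Q e') (local_config Q e)" by (elim conjE bexE) (intro that)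
    define L where "L = local_config Q e"
    define L' where "L' = local_config Q e'"
    have fL: "fconf Q L" unfolding L_def by (rule loc_conf[OF ee])
    have fL': "fconf Q L'" unfolding L'_def by (rule loc_conf[OF e'(1)])
    have mLL: "mark Q hC L = mark Q hC L'" using e'(2) by (simp add: L_def L'_def)
    have LC: "L \<subseteq> C" using loc_sub[OF cC e] by (simp add: L_def)
    obtain D2 where D2: "fconf Q D2" "L' \<subseteq> D2"
     "\<forall>x\<in>C - L. \<exists>x'\<in>D2 - L'. rel L L' (Inr x) (Inr x')"
     "\<forall>x'\<in>D2 - L'. \<exists>x\<in>C - L. rel L L' (Inr x) (Inr x')"
     "\<forall>b\<in>cut Q C. \<exists>b'\<in>cut Q D2. rel L L' (Inl b) (Inl b')"
     "\<forall>b'\<in>cut Q D2. \<exists>b\<in>cut Q C. rel L L' (Inl b) (Inl b')"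
      using inv[OF fL fL' mLL fC LC] by blast
    have mD2: "mark Q hC D2 = M"
    proof -
      have "mark Q hC C = mark Q hC D2"
      proof (rule mark_eq_corr[OF fC D2(1)])
        show "\<forall>b\<in>cut Q C. \<exists>b'\<in>cut Q D2. hC b = hC b'"
        proof
          fix b assume "b \<in> cut Q C"
          then obtain b' where "b' \<in> cut Q D2" "rel L L' (Inl b) (Inl b')" using D2(5) by blast
          then show "\<exists>b'\<in>cut Q D2. hC b = hC b'" using rel_lab_B by blast
        qed
        show "\<forall>b'\<in>cut Q D2. \<exists>b\<in>cut Q C. hC b = hC b'"
        proof
          fix b' assume "b' \<in> cut Q D2"
          then obtain b where "b \<in> cut Q C" "rel L L' (Inl b) (Inl b')" using D2(6) by blast
          then show "\<exists>b\<in>cut Q C. hC b = hC b'" using rel_lab_B by blast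
        qed
      qed
      then show ?thesis using mC by simp
    qed
    have mL'L: "mark Q hC L' = mark Q hC L" using mLL by simp
    obtain fB fE where iso: "fut_iso Q hC hE L' L fB fE"
      and rE: "\<forall>x\<in>fut_events Q L'. rel L' L (Inr x) (Inr (fE x))"
      using iso_ex[OF fL' fL mL'L] by blast
    define X where "X = D2 - L'"
    have cL: "configuration Q L" and cL': "configuration Q L'" using fL fL' fconf_D by auto
    have injL: "inj_on hC (cut Q L)" using inj_cut[OF fL] .
    have Xf: "X \<subseteq> fut_events Q L'"
    proof
      fix x' assume "x' \<in> X"
      then obtain x where r: "rel L L' (Inr x) (Inr x')" using D2(4) by (auto simp: X_def)
      show "x' \<in> fut_events Q L'" using rel_fut[OF cL cL' r] by (simp add: futn_def)
    qed
    have img: "fE ` X = C - L"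
    proof
      show "fE ` X \<subseteq> C - L"
      proof
        fix y assume "y \<in> fE ` X"
        then obtain x' where x': "x' \<in> X" "y = fE x'" by blast
        then obtain x where x: "x \<in> C - L" "rel L L' (Inr x) (Inr x')" using D2(4) by (auto simp: X_def)
        have "Inr x = Inr (fE x')" using rel_fun[OF cL' cL injL rel_sym[OF x(2)]] rE Xf x'(1) by blast
        then show "y \<in> C - L" using x'(2) x(1) by simp
      qed
      show "C - L \<subseteq> fE ` X"
      proof
        fix x assume x: "x \<in> C - L"
        then obtain x' where x': "x' \<in> D2 - L'" "rel L L' (Inr x) (Inr x')" using D2(3) by blast
        have "x' \<in> X" using x'(1) by (simp add: X_def)
        then have "Inr x = Inr (fE x')" using rel_fun[OF cL' cL injL rel_sym[OF x'(2)]] rE Xf by blast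
        then show "x \<in> fE ` X" using \<open>x' \<in> X\<close> by simp
      qed
    qed
    have D2eq: "L' \<union> X = D2" using D2(2) by (auto simp: X_def)
    have Ceq: "L \<union> fE ` X = C" using img LC by auto
    have "finite X" using fconf_D(2)[OF D2(1)] by (simp add: X_def)
    moreover have "configuration Q (L' \<union> X)" using D2eq fconf_D(1)[OF D2(1)] by simp
    moreover have "R L' L" using e'(3) by (simp add: L_def L'_def)
    ultimately have "R (L' \<union> X) (L \<union> fE ` X)" using adq[rule_format, of L' L fB fE X] mL'L iso Xf by simp
    then have "R D2 C" using D2eq Ceq by simp
    then have "D2 \<notin> S" using min by blast
    then show False using D2(1) mD2 by (simp add: S_def)
  qed
qed

lemma oflow_be: "(Inl b, Inr e) \<in> oflow P \<longleftrightarrow> (b,e) \<in> arcs_be P" by (auto simp: oflow_def)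

lemma pfx_flow_sub: "oflow (prefix_net Q hC R) \<subseteq> F"
  by (auto simp: oflow_def prefix_net_def)

lemma co_to_pfx: "co Q x y \<Longrightarrow> co (prefix_net Q hC R) x y"
proof -
  assume c: "co Q x y"
  have ca: "causal (prefix_net Q hC R) u v \<Longrightarrow> causal Q u v" for u v
    unfolding causal_def using trancl_mono pfx_flow_sub by blast
  have cf: "conflict (prefix_net Q hC R) u v \<Longrightarrow> conflict Q u v" for u v
  proof -
    assume "conflict (prefix_net Q hC R) u v"
    then obtain s e1 e2 where h: "(s, e1) \<in> arcs_be (prefix_net Q hC R)" "(s, e2) \<in> arcs_be (prefix_net Q hC R)" "e1 \<noteq> e2"
       "(Inr e1, u) \<in> (oflow (prefix_net Q hC R))\<^sup>*" "(Inr e2, v) \<in> (oflow (prefix_net Q hC R))\<^sup>*"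
      unfolding conflict_def by blast
    have "(s, e1) \<in> arcs_be Q" "(s, e2) \<in> arcs_be Q" using h(1,2) by (auto simp: prefix_net_def)
    moreover have "(Inr e1, u) \<in> F\<^sup>*" "(Inr e2, v) \<in> F\<^sup>*" using h(4,5) rtrancl_mono[OF pfx_flow_sub] by blast+
    ultimately show ?thesis unfolding conflict_def using h(3)
      by (intro exI[of _ s] exI[of _ e1] exI[of _ e2]) simp
  qed
  show ?thesis using c ca cf unfolding co_def by blast
qed

definition pn :: "('e set \<Rightarrow> 'e set \<Rightarrow> bool) \<Rightarrow> 'b + 'e \<Rightarrow> bool" where
  "pn R x = (case x of Inl b \<Rightarrow> b \<in> prefix_conds Q hC R | Inr e \<Rightarrow> e \<in> prefix_events Q hC R)"

lemma pred_closed: assumes zy: "(z,y) \<in> F" and y: "pn R y"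
  shows "pn R z \<and> (z,y) \<in> oflow (prefix_net Q hC R)"
proof (cases y)
  case (Inr e)
  obtain b where b: "z = Inl b" "(b,e) \<in> arcs_be Q" using F_into_Inr zy Inr by blast
  have ep: "e \<in> prefix_events Q hC R" using y Inr by (simp add: pn_def)
  have bp: "b \<in> prefix_conds Q hC R" unfolding prefix_conds_def
  proof (intro CollectI conjI allI impI)
    show "b \<in> conds Q" using b(2) be_sub by blast
    fix e0 assume e0: "(e0, b) \<in> arcs_eb Q"
    have c0: "causal Q (Inr e0) (Inr e)" using two_step e0 b(2) by simp
    show "e0 \<in> prefix_events Q hC R" unfolding prefix_events_def
    proof (intro CollectI conjI notI)
      show "e0 \<in> events Q" using e0 eb_sub by blast
      assume "\<exists>e'\<in>events Q. cutoff Q hC R e' \<and> causal Q (Inr e') (Inr e0)"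
      then obtain e' where "e' \<in> events Q" "cutoff Q hC R e'" "causal Q (Inr e') (Inr e0)" by blast
      moreover then have "causal Q (Inr e') (Inr e)" using c0 unfolding causal_def by (meson trancl_trans)
      ultimately show False using ep unfolding prefix_events_def by blast
    qed
  qed
  show ?thesis using b bp ep Inr by (simp add: pn_def oflow_def prefix_net_def)
next
  case (Inl b)
  obtain e where e: "z = Inr e" "(e,b) \<in> arcs_eb Q" using F_into_Inl zy Inl by blast
  have bp: "b \<in> prefix_conds Q hC R" using y Inl by (simp add: pn_def)
  then have ep: "e \<in> prefix_events Q hC R" using e(2) by (simp add: prefix_conds_def)
  show ?thesis using e bp ep Inl by (simp add: pn_def oflow_def prefix_net_def)
qed

lemma tr_back: "(x,y) \<in> F\<^sup>+ \<Longrightarrow> pn R y \<Longrightarrow> (x,y) \<in> (oflow (prefix_net Q hC R))\<^sup>+ \<and> pn R x"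
proof (induct rule: trancl_induct)
  case (base y)
  have "pn R x \<and> (x,y) \<in> oflow (prefix_net Q hC R)" by (rule pred_closed[OF base(1) base(2)])
  then show ?case by blast
next
  case (step y z)
  have h: "pn R y \<and> (y,z) \<in> oflow (prefix_net Q hC R)" by (rule pred_closed[OF step(2) step(4)])
  then have i: "(x,y) \<in> (oflow (prefix_net Q hC R))\<^sup>+ \<and> pn R x" using step(3) by blast
  have "(x,z) \<in> (oflow (prefix_net Q hC R))\<^sup>+" by (rule trancl_into_trancl[OF i[THEN conjunct1] h[THEN conjunct2]])
  then show ?case using i by blast
qed

lemma rt_back: "(x,y) \<in> F\<^sup>* \<Longrightarrow> pn R y \<Longrightarrow> (x,y) \<in> (oflow (prefix_net Q hC R))\<^sup>* \<and> pn R x"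
proof -
  assume a: "(x,y) \<in> F\<^sup>*" "pn R y"
  show ?thesis
  proof (cases "x = y")
    case True then show ?thesis using a by simp
  next
    case False
    then have "(x,y) \<in> F\<^sup>+" using a(1) by (simp add: rtrancl_eq_or_trancl)
    from tr_back[OF this a(2)] have "(x,y) \<in> (oflow (prefix_net Q hC R))\<^sup>+" "pn R x" by blast+
    then show ?thesis by (simp add: trancl_into_rtrancl)
  qed
qed

lemma co_from_pfx:
  assumes e1: "e1 \<in> prefix_events Q hC R" and e2: "e2 \<in> prefix_events Q hC R"
    and c: "co (prefix_net Q hC R) (Inr e1) (Inr e2)"
  shows "co Q (Inr e1) (Inr e2)"
proof -
  have p1: "pn R (Inr e1)" and p2: "pn R (Inr e2)" using e1 e2 by (simp_all add: pn_def)
  have cc: "\<not> causal (prefix_net Q hC R) (Inr e1) (Inr e2)" "\<not> causal (prefix_net Q hC R) (Inr e2) (Inr e1)"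
    "\<not> conflict (prefix_net Q hC R) (Inr e1) (Inr e2)" using c unfolding co_def by blast+
  have "\<not> causal Q (Inr e1) (Inr e2)"
  proof
    assume "causal Q (Inr e1) (Inr e2)"
    then have "(Inr e1, Inr e2) \<in> F\<^sup>+" by (simp add: causal_def)
    from tr_back[OF this p2] have "causal (prefix_net Q hC R) (Inr e1) (Inr e2)" by (simp add: causal_def)
    then show False using cc(1) by blast
  qed
  moreover have "\<not> causal Q (Inr e2) (Inr e1)"
  proof
    assume "causal Q (Inr e2) (Inr e1)"
    then have "(Inr e2, Inr e1) \<in> F\<^sup>+" by (simp add: causal_def)
    from tr_back[OF this p1] have "causal (prefix_net Q hC R) (Inr e2) (Inr e1)" by (simp add: causal_def)
    then show False using cc(2) by blast
  qed
  moreover have "\<not> conflict Q (Inr e1) (Inr e2)"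
  proof
    assume "conflict Q (Inr e1) (Inr e2)"
    then obtain s c1 c2 where h: "(s, c1) \<in> arcs_be Q" "(s, c2) \<in> arcs_be Q" "c1 \<noteq> c2"
       "(Inr c1, Inr e1) \<in> F\<^sup>*" "(Inr c2, Inr e2) \<in> F\<^sup>*" unfolding conflict_def by blast
    have r1: "(Inr c1, Inr e1) \<in> (oflow (prefix_net Q hC R))\<^sup>*" "pn R (Inr c1)" using rt_back[OF h(4) p1] by blast+
    have r2: "(Inr c2, Inr e2) \<in> (oflow (prefix_net Q hC R))\<^sup>*" "pn R (Inr c2)" using rt_back[OF h(5) p2] by blast+
    have "(Inl s, Inr c1) \<in> F" using h(1) by simp
    from pred_closed[OF this r1(2)] have "(Inl s, Inr c1) \<in> oflow (prefix_net Q hC R)" by blast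
    then have a1: "(s, c1) \<in> arcs_be (prefix_net Q hC R)" by (simp add: oflow_be)
    have "(Inl s, Inr c2) \<in> F" using h(2) by simp
    from pred_closed[OF this r2(2)] have "(Inl s, Inr c2) \<in> oflow (prefix_net Q hC R)" by blast
    then have a2: "(s, c2) \<in> arcs_be (prefix_net Q hC R)" by (simp add: oflow_be)
    have "conflict (prefix_net Q hC R) (Inr e1) (Inr e2)" unfolding conflict_def using a1 a2 h(3) r1(1) r2(1)
      by (intro exI[of _ s] exI[of _ c1] exI[of _ c2]) simp
    then show False using cc(3) by blast
  qed
  ultimately show ?thesis unfolding co_def by blast
qed

lemma pfx_events: "events (prefix_net Q hC R) = prefix_events Q hC R" by (simp add: prefix_net_def)

lemma bwd:
  assumes e1: "e1 \<in> events Q" and e2: "e2 \<in> events Q" and ne: "e1 \<noteq> e2" and c: "co Q (Inr e1) (Inr e2)"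
  shows "tar N M0 (hE e1) (hE e2) \<and> postT N (hE e1) \<inter> preT N (hE e2) = {}"
proof -
  have nc12: "\<not> causal Q (Inr e1) (Inr e2)" and nc21: "\<not> causal Q (Inr e2) (Inr e1)"
    and ncf: "\<not> conflict Q (Inr e1) (Inr e2)" using c unfolding co_def by blast+
  have bad: "False" if a: "a \<in> {e1,e2}" and b: "b \<in> {e1,e2}" and cf: "conflict Q (Inr a) (Inr b)" for a b
  proof (cases "a = b")
    case True then show False using cf nsc by simp
  next
    case False
    then have "(a = e1 \<and> b = e2) \<or> (a = e2 \<and> b = e1)" using a b by blast
    then show False using cf ncf cf_sym by blast
  qed
  define D where "D = {z \<in> events Q. causal Q (Inr z) (Inr e1) \<or> causal Q (Inr z) (Inr e2)}"
  have Drt: "\<exists>a\<in>{e1,e2}. (Inr z, Inr a) \<in> F\<^sup>*" if "z \<in> D" for z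
    using that unfolding D_def causal_def by (blast intro: trancl_into_rtrancl)
  have cD: "configuration Q D" unfolding configuration_def
  proof (intro conjI ballI impI)
    show "D \<subseteq> events Q" by (auto simp: D_def)
  next
    fix x z assume x: "x \<in> D" and z: "z \<in> events Q" "causal Q (Inr z) (Inr x)"
    then show "z \<in> D" unfolding D_def causal_def by (blast intro: trancl_trans)
  next
    fix x y assume x: "x \<in> D" and y: "y \<in> D"
    show "\<not> conflict Q (Inr x) (Inr y)"
    proof
      assume cf: "conflict Q (Inr x) (Inr y)"
      obtain a where a: "a \<in> {e1,e2}" "(Inr x, Inr a) \<in> F\<^sup>*" using Drt[OF x] by blast
      obtain b where b: "b \<in> {e1,e2}" "(Inr y, Inr b) \<in> F\<^sup>*" using Drt[OF y] by blast
      have "conflict Q (Inr a) (Inr y)" by (rule cf_fwd1[OF cf a(2)])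
      then have "conflict Q (Inr a) (Inr b)" by (rule cf_fwd[OF _ b(2)])
      then show False using bad a(1) b(1) by blast
    qed
  qed
  have fD: "fconf Q D"
  proof -
    have f1: "finite {y. causal Q y (Inr e1)}" and f2: "finite {y. causal Q y (Inr e2)}" using finpast nodes_Inr e1 e2 by blast+
    have "finite (Inr -` {y. causal Q y (Inr e1)} :: 'e set)" using f1 by (rule finite_vimageI) simp
    moreover have "finite (Inr -` {y. causal Q y (Inr e2)} :: 'e set)" using f2 by (rule finite_vimageI) simp
    ultimately have fu: "finite ((Inr -` {y. causal Q y (Inr e1)}) \<union> (Inr -` {y. causal Q y (Inr e2)}) :: 'e set)" by simp
    have "D \<subseteq> (Inr -` {y. causal Q y (Inr e1)}) \<union> (Inr -` {y. causal Q y (Inr e2)})" by (auto simp: D_def)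
    then have "finite D" using fu finite_subset by blast
    then show ?thesis using cD by (simp add: fconf_def)
  qed
  have nD: "a \<notin> D" if "a \<in> {e1,e2}" for a
    using that acyc nc12 nc21 by (auto simp: D_def)
  have pc: "preE Q a \<subseteq> cut Q D" if a: "a \<in> {e1,e2}" for a
  proof
    fix b assume b: "b \<in> preE Q a"
    then have ba: "(b,a) \<in> arcs_be Q" by (simp add: preE_def)
    have ae: "a \<in> events Q" using a e1 e2 by blast
    have "b \<in> minC Q \<union> (\<Union>e\<in>D. postE Q e)"
    proof (cases "preC Q b = {}")
      case True then show ?thesis using ba be_sub by (auto simp: minC_def)
    next
      case False
      then obtain d where d: "(d,b) \<in> arcs_eb Q" by (auto simp: preC_def)
      then have "causal Q (Inr d) (Inr a)" using two_step ba by simp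
      moreover have "d \<in> events Q" using d eb_sub by blast
      ultimately have "d \<in> D" using a by (auto simp: D_def)
      then show ?thesis using d by (auto simp: postE_def)
    qed
    moreover have "b \<notin> (\<Union>e\<in>D. preE Q e)"
    proof
      assume "b \<in> (\<Union>e\<in>D. preE Q e)"
      then obtain z where z: "z \<in> D" "(b,z) \<in> arcs_be Q" by (auto simp: preE_def)
      have "z \<noteq> a" using nD[OF a] z(1) by blast
      then have cf: "conflict Q (Inr a) (Inr z)" unfolding conflict_def using ba z(2)
        by (intro exI[of _ b] exI[of _ a] exI[of _ z]) simp
      obtain a' where a': "a' \<in> {e1,e2}" "(Inr z, Inr a') \<in> F\<^sup>*" using Drt[OF z(1)] by blast
      have "conflict Q (Inr a) (Inr a')" by (rule cf_fwd[OF cf a'(2)])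
      then show False using bad a a'(1) by blast
    qed
    ultimately show "b \<in> cut Q D" unfolding cut_def by blast
  qed
  have pc1: "preE Q e1 \<subseteq> cut Q D" and pc2: "preE Q e2 \<subseteq> cut Q D" using pc by auto
  have fin: "finite D" using fD fconf_D by blast
  note m1 = mark_ext[OF cD fin e1 pc1]
  define D1 where "D1 = insert e1 D"
  have cutD1: "cut Q D1 = (cut Q D - preE Q e1) \<union> postE Q e1" using ext(4)[OF cD e1 pc1] by (simp add: D1_def)
  have fD1: "fconf Q D1" using ext(3)[OF cD e1 pc1] fin by (simp add: fconf_def D1_def)
  have dis: "preE Q e2 \<inter> preE Q e1 = {}"
  proof (rule ccontr)
    assume "preE Q e2 \<inter> preE Q e1 \<noteq> {}"
    then obtain b where "(b,e1) \<in> arcs_be Q" "(b,e2) \<in> arcs_be Q" by (auto simp: preE_def)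
    then have "conflict Q (Inr e1) (Inr e2)" unfolding conflict_def using ne
      by (intro exI[of _ b] exI[of _ e1] exI[of _ e2]) simp
    then show False using ncf by blast
  qed
  have pc2': "preE Q e2 \<subseteq> cut Q D1" using pc2 dis cutD1 by blast
  note m2 = mark_ext[OF fconf_D(1)[OF fD1] fconf_D(2)[OF fD1] e2 pc2']
  have "tar N M0 (hE e1) (hE e2)" unfolding tar_def
  proof (intro bexI[of _ "mark Q hC D"] conjI)
    show "mark Q hC D \<in> reach N M0" using reach_mark[OF fD] .
    show "enabled N (mark Q hC D) (hE e1)" using m1(2) .
    show "enabled N (fire N (mark Q hC D) (hE e1)) (hE e2)" using m1(1) m2(2) by (simp add: D1_def)
  qed
  moreover have "postT N (hE e1) \<inter> preT N (hE e2) = {}"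
  proof (rule ccontr)
    assume "postT N (hE e1) \<inter> preT N (hE e2) \<noteq> {}"
    then obtain p where p: "p \<in> postT N (hE e1)" "p \<in> preT N (hE e2)" by blast
    have "p \<in> hC ` postE Q e1" using p(1) bij_post[OF e1] by (simp add: bij_betw_def)
    then obtain b1 where b1: "b1 \<in> postE Q e1" "hC b1 = p" by (metis imageE)
    have "p \<in> hC ` preE Q e2" using p(2) bij_pre[OF e2] by (simp add: bij_betw_def)
    then obtain b2 where b2: "b2 \<in> preE Q e2" "hC b2 = p" by (metis imageE)
    have "b1 \<in> cut Q D1" using b1(1) cutD1 by blast
    moreover have "b2 \<in> cut Q D1" using b2(1) pc2' by blast
    ultimately have "b1 = b2" using inj_cut[OF fD1] b1(2) b2(2) by (auto simp: inj_on_def)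
    then have "(Inr e1, Inl b1) \<in> F" "(Inl b1, Inr e2) \<in> F" using b1(1) b2(1) by (auto simp: postE_def preE_def)
    then have "causal Q (Inr e1) (Inr e2)" by (rule two_step)
    then show False using nc12 by blast
  qed
  ultimately show ?thesis by blast
qed

lemma fwd:
  assumes ad: "adequate_order Q hC hE R" and tr: "tar N M0 t1 t2" and dj: "postT N t1 \<inter> preT N t2 = {}"
  shows "\<exists>e1\<in>prefix_events Q hC R. \<exists>e2\<in>prefix_events Q hC R.
            e1 \<noteq> e2 \<and> co Q (Inr e1) (Inr e2) \<and> hE e1 = t1 \<and> hE e2 = t2"
proof -
  obtain Ms where Ms: "Ms \<in> reach N M0" "enabled N Ms t1" "enabled N (fire N Ms t1) t2"
    using tr unfolding tar_def by blast
  have le1: "Ms p \<le> 1" for p using Ms(1) os by (simp add: one_safe_def)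
  have t1: "t1 \<in> trans N" and t2: "t2 \<in> trans N" using Ms(2,3) by (simp_all add: enabled_def)
  have fv: "fire N Ms t1 p = Ms p - (if p \<in> preT N t1 then 1 else 0)" if "p \<in> preT N t2" for p
    using that dj by (auto simp: fire_def)
  have en2: "1 \<le> fire N Ms t1 p" if "p \<in> preT N t2" for p using Ms(3) that by (simp add: enabled_def)
  have pdis: "preT N t1 \<inter> preT N t2 = {}"
  proof (rule ccontr)
    assume "preT N t1 \<inter> preT N t2 \<noteq> {}"
    then obtain p where p: "p \<in> preT N t1" "p \<in> preT N t2" by blast
    have "fire N Ms t1 p = Ms p - 1" using fv[OF p(2)] p(1) by simp
    then show False using en2[OF p(2)] le1[of p] by simp
  qed
  have "enabled N Ms t2" unfolding enabled_def
  proof (intro conjI ballI)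
    show "t2 \<in> trans N" by fact
    fix p assume p: "p \<in> preT N t2"
    then show "1 \<le> Ms p" using en2[OF p] fv[OF p] by simp
  qed
  then have en2': "enabled N Ms t2" .
  obtain C where C: "fconf Q C" "mark Q hC C = Ms" "\<forall>e\<in>C. \<not> cutoff Q hC R e"
    using complete[OF Ms(1) ad] by blast
  have cC: "configuration Q C" "finite C" using C(1) fconf_D by auto
  obtain e1 where e1: "e1 \<in> events Q" "hE e1 = t1" "preE Q e1 = {b\<in>cut Q C. hC b \<in> preT N t1}"
    using ext_exists[OF C(1)] Ms(2) C(2) by blast
  obtain e2 where e2: "e2 \<in> events Q" "hE e2 = t2" "preE Q e2 = {b\<in>cut Q C. hC b \<in> preT N t2}"
    using ext_exists[OF C(1)] en2' C(2) by blast
  have pc1: "preE Q e1 \<subseteq> cut Q C" and pc2: "preE Q e2 \<subseteq> cut Q C" using e1(3) e2(3) by auto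
  note x1 = ext[OF cC(1) e1(1) pc1] and x2 = ext[OF cC(1) e2(1) pc2]
  have inpfx: "e \<in> prefix_events Q hC R" if "e \<in> events Q" "\<And>c. causal Q (Inr c) (Inr e) \<Longrightarrow> c \<in> C" for e
    unfolding prefix_events_def using that C(3) by blast
  have p1: "e1 \<in> prefix_events Q hC R" using inpfx[OF e1(1) x1(2)] by blast
  have p2: "e2 \<in> prefix_events Q hC R" using inpfx[OF e2(1) x2(2)] by blast
  have tne: "t1 \<noteq> t2" using pdis preT_ne[OF t1] by blast
  then have ne: "e1 \<noteq> e2" using e1(2) e2(2) by blast
  have pd: "preE Q e2 \<inter> preE Q e1 = {}" using e1(3) e2(3) pdis by auto
  have "\<not> causal Q (Inr e1) (Inr e2)" using x2(2) x1(1) by blast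
  moreover have "\<not> causal Q (Inr e2) (Inr e1)" using x1(2) x2(1) by blast
  moreover have "\<not> conflict Q (Inr e1) (Inr e2)"
  proof -
    have "preE Q e2 \<subseteq> cut Q (insert e1 C)" using x1(4) pc2 pd by blast
    note y = ext[OF x1(3) e2(1) this]
    show ?thesis using conf_cf[OF y(3)] by blast
  qed
  ultimately have "co Q (Inr e1) (Inr e2)" unfolding co_def by blast
  then show ?thesis using p1 p2 ne e1(2) e2(2) by blast
qed

end

theorem proposition4:
  fixes N :: "('p,'t) pnet" and M0 :: "'p marking"
    and Q :: "('b,'e) onet" and hC :: "'b \<Rightarrow> 'p" and hE :: "'e \<Rightarrow> 't"
    and R :: "'e set \<Rightarrow> 'e set \<Rightarrow> bool" and t1 t2 :: 't
  assumes "net_system N M0" and "one_safe N M0"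
    and "is_unfolding N M0 Q hC hE" and "adequate_order Q hC hE R"
    and "t1 \<in> trans N" and "t2 \<in> trans N"
  shows "(tar N M0 t1 t2 \<and> postT N t1 \<inter> preT N t2 = {}) \<longleftrightarrow>
         (\<exists>e1 \<in> events (prefix_net Q hC R). \<exists>e2 \<in> events (prefix_net Q hC R).
            e1 \<noteq> e2 \<and> co (prefix_net Q hC R) (Inr e1) (Inr e2) \<and> hE e1 = t1 \<and> hE e2 = t2)"
proof -
  interpret U: unf N M0 Q hC hE using assms(1-3) by (unfold_locales) 
  show ?thesis
  proof
    assume h: "tar N M0 t1 t2 \<and> postT N t1 \<inter> preT N t2 = {}"
    obtain e1 e2 where e: "e1 \<in> prefix_events Q hC R" "e2 \<in> prefix_events Q hC R"
      "e1 \<noteq> e2" "co Q (Inr e1) (Inr e2)" "hE e1 = t1" "hE e2 = t2"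
      using U.fwd[OF assms(4)] h by blast
    then show "\<exists>e1 \<in> events (prefix_net Q hC R). \<exists>e2 \<in> events (prefix_net Q hC R).
            e1 \<noteq> e2 \<and> co (prefix_net Q hC R) (Inr e1) (Inr e2) \<and> hE e1 = t1 \<and> hE e2 = t2"
      using U.co_to_pfx U.pfx_events by metis
  next
    assume "\<exists>e1 \<in> events (prefix_net Q hC R). \<exists>e2 \<in> events (prefix_net Q hC R).
            e1 \<noteq> e2 \<and> co (prefix_net Q hC R) (Inr e1) (Inr e2) \<and> hE e1 = t1 \<and> hE e2 = t2"
    then obtain e1 e2 where e: "e1 \<in> prefix_events Q hC R" "e2 \<in> prefix_events Q hC R"
      "e1 \<noteq> e2" "co (prefix_net Q hC R) (Inr e1) (Inr e2)" "hE e1 = t1" "hE e2 = t2"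
      using U.pfx_events by blast
    have c: "co Q (Inr e1) (Inr e2)" using U.co_from_pfx[OF e(1,2,4)] .
    have ev: "e1 \<in> events Q" "e2 \<in> events Q" using e(1,2) by (auto simp: prefix_events_def)
    show "tar N M0 t1 t2 \<and> postT N t1 \<inter> preT N t2 = {}" using U.bwd[OF ev e(3) c] e(5,6) by simp
  qed
qed

end
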